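(* For every $\varepsilon>0$ and integer $k\ge2$ there exist $\delta,\eta>0$ such that for all $n>1/\eta$ and all $\mu\in\mathcal P(\Omega^n)$ the following holds. If for any two $(\delta,k)$-states $S_1,S_2$ of $\mu$ with $\mu(S_1),\mu(S_2)\ge\eta$ we have $\frac1n\sum_{x\in[n]}\|\mu_{\downarrow x}[\cdot|S_1]-\mu_{\downarrow x}[\cdot|S_2]\|_{TV}<\delta$, then $\mu$ is $(\varepsilon,k)$-symmetric.
   Context: $\Omega$ is a fixed finite nonempty set, $\mathcal P(\mathcal X)$ the set of probability measures on a finite set $\mathcal X$, $\|\cdot\|_{TV}$ total variation. For $\mu\in\mathcal P(\Omega^n)$ and $S\subset\Omega^n$ with $\mu(S)>0$, $\mu[\cdot|S]$ is the conditional measure; for $x_1,\dots,x_k\in[n]$, $\mu_{\downarrow\{x_1,\dots,x_k\}}[\cdot|S]$ denotes the joint law of $(\boldsymbol\sigma(x_1),\dots,\boldsymbol\sigma(x_k))$ for $\boldsymbol\sigma\sim\mu[\cdot|S]$ and $\mu_{\downarrow x}[\cdot|S]$ the law of $\boldsymbol\sigma(x)$. A set $S\subset\Omega^n$ is an $(\varepsilon,k)$-state of $\mu$ if $\mu(S)>0$ and $\frac1{n^k}\sum_{x_1,\dots,x_k\in[n]}\|\mu_{\downarrow\{x_1,\dots,x_k\}}[\cdot|S]-\mu_{\downarrow x_1}[\cdot|S]\otimes\cdots\otimes\mu_{\downarrow x_k}[\cdot|S]\|_{TV}<\varepsilon$. The measure $\mu$ is $(\varepsilon,k)$-symmetric if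 $\Omega^n$ itself is an $(\varepsilon,k)$-state of $\mu$. *)

theory Defs
  imports Complex_Main "HOL-Library.FuncSet"
begin

text \<open>Omega is modelled as a finite type 'a (nonempty automatically).
  Configurations in Omega^n are extensional functions {..<n} -> 'a
  (positions 0..n-1 stand for [n]).\<close>

definition cube :: "nat \<Rightarrow> (nat \<Rightarrow> 'a::finite) set" where
  "cube n = PiE {..<n} (\<lambda>_. UNIV)"

definition is_prob :: "nat \<Rightarrow> ((nat \<Rightarrow> 'a::finite) \<Rightarrow> real) \<Rightarrow> bool" where
  "is_prob n \<mu> \<longleftrightarrow> (\<forall>\<sigma>\<in>cube n. \<mu> \<sigma> \<ge> 0) \<and> sum \<mu> (cube n) = 1"

definition msr :: "((nat \<Rightarrow> 'a) \<Rightarrow> real) \<Rightarrow> (nat \<Rightarrow> 'a) set \<Rightarrow> real" where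
  "msr \<mu> S = sum \<mu> S"

definition marg :: "((nat \<Rightarrow> 'a) \<Rightarrow> real) \<Rightarrow> (nat \<Rightarrow> 'a) set \<Rightarrow> nat list \<Rightarrow> 'a list \<Rightarrow> real" where
  "marg \<mu> S xs \<tau> = (\<Sum>\<sigma>\<in>S. if map \<sigma> xs = \<tau> then \<mu> \<sigma> else 0) / msr \<mu> S"

definition marg1 :: "((nat \<Rightarrow> 'a) \<Rightarrow> real) \<Rightarrow> (nat \<Rightarrow> 'a) set \<Rightarrow> nat \<Rightarrow> 'a \<Rightarrow> real" where
  "marg1 \<mu> S x a = (\<Sum>\<sigma>\<in>S. if \<sigma> x = a then \<mu> \<sigma> else 0) / msr \<mu> S"

definition prod_marg :: "((nat \<Rightarrow> 'a) \<Rightarrow> real) \<Rightarrow> (nat \<Rightarrow> 'a) set \<Rightarrow> nat list \<Rightarrow> 'a list \<Rightarrow> real" where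
  "prod_marg \<mu> S xs \<tau> = (\<Prod>i<length xs. marg1 \<mu> S (xs ! i) (\<tau> ! i))"

text \<open>Total variation distance (= max_A |P(A)-Q(A)| = half the L1 distance).\<close>
definition tv_list :: "nat \<Rightarrow> ('a::finite list \<Rightarrow> real) \<Rightarrow> ('a list \<Rightarrow> real) \<Rightarrow> real" where
  "tv_list k p q = (\<Sum>\<tau>\<in>{\<tau>::'a list. length \<tau> = k}. \<bar>p \<tau> - q \<tau>\<bar>) / 2"

definition tv1 :: "('a::finite \<Rightarrow> real) \<Rightarrow> ('a \<Rightarrow> real) \<Rightarrow> real" where
  "tv1 p q = (\<Sum>a\<in>UNIV. \<bar>p a - q a\<bar>) / 2"

definition tuples :: "nat \<Rightarrow> nat \<Rightarrow> nat list set" where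
  "tuples n k = {xs. length xs = k \<and> set xs \<subseteq> {..<n}}"

definition is_state :: "nat \<Rightarrow> ((nat \<Rightarrow> 'a::finite) \<Rightarrow> real) \<Rightarrow> real \<Rightarrow> nat \<Rightarrow> (nat \<Rightarrow> 'a) set \<Rightarrow> bool" where
  "is_state n \<mu> \<epsilon> k S \<longleftrightarrow> S \<subseteq> cube n \<and> msr \<mu> S > 0 \<and>
     (1 / real n ^ k) * (\<Sum>xs\<in>tuples n k. tv_list k (marg \<mu> S xs) (prod_marg \<mu> S xs)) < \<epsilon>"

definition is_symmetric :: "nat \<Rightarrow> ((nat \<Rightarrow> 'a::finite) \<Rightarrow> real) \<Rightarrow> real \<Rightarrow> nat \<Rightarrow> bool" where
  "is_symmetric n \<mu> \<epsilon> k \<longleftrightarrow> is_state n \<mu> \<epsilon> k (cube n)"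

end

theory Submission
  imports Defs
begin

definition LL :: "nat \<Rightarrow> 'a list set" where "LL j = {\<tau>. length \<tau> = j}"

lemma finite_LL[simp]: "finite (LL j :: 'a::finite list set)"
proof -
  have "LL j = {xs::'a list. set xs \<subseteq> UNIV \<and> length xs = j}" by (auto simp: LL_def)
  then show ?thesis using finite_lists_length_eq[of "UNIV::'a set" j] by simp
qed

lemma card_LL: "card (LL j :: 'a::finite list set) = card (UNIV::'a set) ^ j"
proof -
  have "LL j = {xs::'a list. set xs \<subseteq> UNIV \<and> length xs = j}" by (auto simp: LL_def)
  then show ?thesis using card_lists_length_eq[of "UNIV::'a set" j] by simp
qed

lemma LL_0: "LL 0 = {[]}" by (auto simp: LL_def)

lemma sum_LL_Suc: "(\<Sum>\<tau>\<in>LL (Suc j). f \<tau>) = (\<Sum>b\<in>(UNIV::'a::finite set). \<Sum>\<rho>\<in>LL j. f (b#\<rho>))"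
proof -
  have e: "LL (Suc j) = (\<lambda>(b,\<rho>). b#\<rho>) ` (UNIV \<times> LL j)"
    by (auto simp: LL_def image_iff length_Suc_conv)
  have i: "inj_on (\<lambda>(b,\<rho>). b#\<rho>) (UNIV \<times> (LL j :: 'a list set))" by (auto simp: inj_on_def)
  show ?thesis unfolding e sum.reindex[OF i] by (simp add: sum.cartesian_product split_def)
qed

lemma tuples_eq: "tuples n j = {xs. set xs \<subseteq> {..<n} \<and> length xs = j}" by (auto simp: tuples_def)

lemma finite_tuples[simp]: "finite (tuples n j)"
  unfolding tuples_eq by (rule finite_lists_length_eq) simp

lemma card_tuples: "card (tuples n j) = n ^ j"
  unfolding tuples_eq using card_lists_length_eq[of "{..<n}" j] by simp

lemma tuples_0: "tuples n 0 = {[]}" by (auto simp: tuples_def)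

lemma sum_tuples_Suc: "(\<Sum>xs\<in>tuples n (Suc j). f xs) = (\<Sum>y<n. \<Sum>xs\<in>tuples n j. f (y#xs))"
proof -
  have e: "tuples n (Suc j) = (\<lambda>(b,\<rho>). b#\<rho>) ` ({..<n} \<times> tuples n j)"
    by (auto simp: tuples_def image_iff length_Suc_conv)
  have i: "inj_on (\<lambda>(b,\<rho>). b#\<rho>) ({..<n} \<times> tuples n j)" by (auto simp: inj_on_def)
  show ?thesis unfolding e sum.reindex[OF i] by (simp add: sum.cartesian_product split_def)
qed

lemma tv_list_Suc: "tv_list (Suc j) p q = (\<Sum>b\<in>UNIV. \<Sum>\<rho>\<in>LL j. \<bar>p (b#\<rho>) - q (b#\<rho>)\<bar>) / 2"
  unfolding tv_list_def using sum_LL_Suc[where j=j and f="\<lambda>\<tau>. \<bar>p \<tau> - q \<tau>\<bar>"] by (simp add: LL_def)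

lemma tv_list_LL: "tv_list j p q = (\<Sum>\<tau>\<in>LL j. \<bar>p \<tau> - q \<tau>\<bar>) / 2"
  unfolding tv_list_def LL_def by simp

definition W :: "((nat \<Rightarrow> 'a) \<Rightarrow> real) \<Rightarrow> (nat \<Rightarrow> 'a) set \<Rightarrow> nat list \<Rightarrow> 'a list \<Rightarrow> real" where
  "W \<mu> S xs \<rho> = (\<Sum>\<sigma>\<in>S. if map \<sigma> xs = \<rho> then \<mu> \<sigma> else 0)"

definition NN :: "((nat \<Rightarrow> 'a) \<Rightarrow> real) \<Rightarrow> (nat \<Rightarrow> 'a) set \<Rightarrow> bool" where
  "NN \<mu> S \<longleftrightarrow> finite S \<and> (\<forall>\<sigma>\<in>S. 0 \<le> \<mu> \<sigma>)"

lemma NN_subset: "NN \<mu> S \<Longrightarrow> T \<subseteq> S \<Longrightarrow> NN \<mu> T"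
  unfolding NN_def by (auto intro: finite_subset)

lemma marg_W: "marg \<mu> S xs \<rho> = W \<mu> S xs \<rho> / msr \<mu> S"
  by (simp add: marg_def W_def)

lemma marg1_marg: "marg1 \<mu> S x a = marg \<mu> S [x] [a]"
  by (simp add: marg1_def marg_def)

lemma msr_nonneg: "NN \<mu> S \<Longrightarrow> 0 \<le> msr \<mu> S"
  unfolding NN_def msr_def by (auto intro: sum_nonneg)

lemma W_nonneg: "NN \<mu> S \<Longrightarrow> 0 \<le> W \<mu> S xs \<rho>"
  unfolding NN_def W_def by (auto intro: sum_nonneg)

lemma W_le_msr: "NN \<mu> S \<Longrightarrow> W \<mu> S xs \<rho> \<le> msr \<mu> S"
  unfolding NN_def W_def msr_def by (auto intro: sum_mono)

lemma sum_W: assumes "NN \<mu> S"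
  shows "(\<Sum>\<rho>\<in>LL (length xs). W \<mu> S xs \<rho>) = msr \<mu> (S :: (nat \<Rightarrow> 'a::finite) set)"
proof -
  have "(\<Sum>\<rho>\<in>LL (length xs). W \<mu> S xs \<rho>) = (\<Sum>\<sigma>\<in>S. \<Sum>\<rho>\<in>LL (length xs). if map \<sigma> xs = \<rho> then \<mu> \<sigma> else 0)"
    unfolding W_def by (rule sum.swap)
  also have "\<dots> = (\<Sum>\<sigma>\<in>S. \<mu> \<sigma>)"
    proof (rule sum.cong)
    fix \<sigma> assume "\<sigma> \<in> S"
    have "map \<sigma> xs \<in> LL (length xs)" by (simp add: LL_def)
    then show "(\<Sum>\<rho>\<in>LL (length xs). if map \<sigma> xs = \<rho> then \<mu> \<sigma> else 0) = \<mu> \<sigma>"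
      by (simp add: sum.delta)
  qed simp
  finally show ?thesis by (simp add: msr_def)
qed

lemma sum_split_y: assumes "finite S"
  shows "(\<Sum>b\<in>(UNIV::'a::finite set). \<Sum>\<sigma>\<in>{\<sigma>\<in>S. \<sigma> y = b}. g \<sigma>) = (\<Sum>\<sigma>\<in>S. g \<sigma>)"
proof -
  have "(\<Sum>b\<in>(UNIV::'a set). \<Sum>\<sigma>\<in>{\<sigma>\<in>S. \<sigma> y = b}. g \<sigma>) = (\<Sum>b\<in>(UNIV::'a set). \<Sum>\<sigma>\<in>S. if \<sigma> y = b then g \<sigma> else 0)"
    using assms by (simp add: sum.inter_filter)
  also have "\<dots> = (\<Sum>\<sigma>\<in>S. \<Sum>b\<in>(UNIV::'a set). if \<sigma> y = b then g \<sigma> else 0)"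
    by (rule sum.swap)
  also have "\<dots> = (\<Sum>\<sigma>\<in>S. g \<sigma>)" by simp
  finally show ?thesis .
qed

lemma W_Cons: assumes "finite S"
  shows "W \<mu> S (y#xs) (b#\<rho>) = W \<mu> {\<sigma>\<in>S. \<sigma> y = b} xs \<rho>"
proof -
  have "W \<mu> S (y#xs) (b#\<rho>) = (\<Sum>\<sigma>\<in>S. if \<sigma> y = b then (if map \<sigma> xs = \<rho> then \<mu> \<sigma> else 0) else 0)"
    unfolding W_def by (rule sum.cong) auto
  also have "\<dots> = W \<mu> {\<sigma>\<in>S. \<sigma> y = b} xs \<rho>"
    unfolding W_def using assms by (rule sum.inter_filter[symmetric])
  finally show ?thesis .
qed

lemma W_single: assumes "finite S" shows "W \<mu> S [y] [b] = msr \<mu> {\<sigma>\<in>S. \<sigma> y = b}"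
  using W_Cons[OF assms, of \<mu> y "[]" b "[]"] by (simp add: W_def msr_def)

lemma sum_msr_split: assumes "finite S"
  shows "(\<Sum>b\<in>(UNIV::'a::finite set). msr \<mu> {\<sigma>\<in>S. \<sigma> y = b}) = msr \<mu> S"
  unfolding msr_def by (rule sum_split_y[OF assms])

lemma sum_W_split: assumes "finite S"
  shows "(\<Sum>b\<in>(UNIV::'a::finite set). W \<mu> {\<sigma>\<in>S. \<sigma> y = b} xs \<rho>) = W \<mu> S xs \<rho>"
  unfolding W_def by (rule sum_split_y[OF assms])

lemma marg_nonneg: "NN \<mu> S \<Longrightarrow> 0 \<le> marg \<mu> S xs \<rho>"
  by (simp add: marg_W W_nonneg msr_nonneg)

lemma sum_marg: assumes "NN \<mu> S" "msr \<mu> S > 0"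
  shows "(\<Sum>\<rho>\<in>LL (length xs). marg \<mu> (S :: (nat \<Rightarrow> 'a::finite) set) xs \<rho>) = 1"
  using assms by (simp add: marg_W sum_divide_distrib[symmetric] sum_W)

lemma marg1_nonneg: "NN \<mu> S \<Longrightarrow> 0 \<le> marg1 \<mu> S x a"
  by (simp add: marg1_marg marg_nonneg)

lemma sum_marg1: assumes "NN \<mu> S" "msr \<mu> S > 0"
  shows "(\<Sum>a\<in>UNIV. marg1 \<mu> (S :: (nat \<Rightarrow> 'a::finite) set) x a) = 1"
proof -
  have "(\<Sum>\<rho>\<in>LL (length [x]). marg \<mu> S [x] \<rho>) = 1" by (rule sum_marg[OF assms])
  then show ?thesis by (simp add: sum_LL_Suc LL_0 marg1_marg)
qed

lemma prod_marg_Nil[simp]: "prod_marg \<mu> S [] \<rho> = 1"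
  by (simp add: prod_marg_def)

lemma prod_marg_Cons: "prod_marg \<mu> S (y#xs) (b#\<rho>) = marg1 \<mu> S y b * prod_marg \<mu> S xs \<rho>"
  unfolding prod_marg_def by (simp only: length_Cons prod.lessThan_Suc_shift) simp

lemma prod_marg_nonneg: "NN \<mu> S \<Longrightarrow> 0 \<le> prod_marg \<mu> S xs \<rho>"
  unfolding prod_marg_def by (auto intro: prod_nonneg marg1_nonneg)

lemma sum_prod_marg: assumes "NN \<mu> S" "msr \<mu> S > 0"
  shows "(\<Sum>\<rho>\<in>LL (length xs). prod_marg \<mu> (S :: (nat \<Rightarrow> 'a::finite) set) xs \<rho>) = 1"
proof (induction xs)
  case Nil
  then show ?case by (simp add: LL_0)
next
  case (Cons y xs)
  have "(\<Sum>\<rho>\<in>LL (length (y#xs)). prod_marg \<mu> S (y#xs) \<rho>)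
      = (\<Sum>b\<in>UNIV. marg1 \<mu> S y b * (\<Sum>\<rho>\<in>LL (length xs). prod_marg \<mu> S xs \<rho>))"
    by (simp add: sum_LL_Suc prod_marg_Cons sum_distrib_left)
  also have "\<dots> = 1" using Cons sum_marg1[OF assms] by simp
  finally show ?case .
qed

lemma marg_Nil: assumes "msr \<mu> S > 0" shows "marg \<mu> S [] [] = 1"
  using assms by (simp add: marg_def msr_def)

lemma tv_list_triangle: "tv_list j p r \<le> tv_list j p q + tv_list j q (r :: 'a::finite list \<Rightarrow> real)"
proof -
  have "(\<Sum>\<tau>\<in>LL j. \<bar>p \<tau> - r \<tau>\<bar>) \<le> (\<Sum>\<tau>\<in>LL j. \<bar>p \<tau> - q \<tau>\<bar> + \<bar>q \<tau> - r \<tau>\<bar>)"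
    by (rule sum_mono) linarith
  then show ?thesis by (simp add: tv_list_LL sum.distrib add_divide_distrib[symmetric] divide_right_mono)
qed

lemma tv_list_nonneg: "0 \<le> tv_list j p q"
  unfolding tv_list_def by (auto intro: sum_nonneg)

lemma tv1_nonneg: "0 \<le> tv1 p q"
  unfolding tv1_def by (auto intro: sum_nonneg)

lemma tv_prod_step:
  fixes a c :: "'a::finite \<Rightarrow> real"
  assumes a0: "\<And>b. 0 \<le> a b" and a1: "(\<Sum>b\<in>UNIV. a b) = 1"
    and g0: "\<And>\<rho>. 0 \<le> g \<rho>" and g1: "(\<Sum>\<rho>\<in>LL l. g \<rho>) = 1"
    and F: "\<And>b \<rho>. F (b#\<rho>) = a b * f \<rho>" and G: "\<And>b \<rho>. G (b#\<rho>) = c b * g \<rho>"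
  shows "tv_list (Suc l) F G \<le> tv1 a c + tv_list l f g"
proof -
  have "(\<Sum>b\<in>UNIV. \<Sum>\<rho>\<in>LL l. \<bar>F (b#\<rho>) - G (b#\<rho>)\<bar>)
      \<le> (\<Sum>b\<in>UNIV. \<Sum>\<rho>\<in>LL l. a b * \<bar>f \<rho> - g \<rho>\<bar> + \<bar>a b - c b\<bar> * g \<rho>)"
  proof (intro sum_mono)
    fix b \<rho>
    have "F (b#\<rho>) - G (b#\<rho>) = a b * (f \<rho> - g \<rho>) + (a b - c b) * g \<rho>"
      by (simp add: F G algebra_simps)
    also have "\<bar>\<dots>\<bar> \<le> \<bar>a b * (f \<rho> - g \<rho>)\<bar> + \<bar>(a b - c b) * g \<rho>\<bar>" by (rule abs_triangle_ineq)
    also have "\<dots> = a b * \<bar>f \<rho> - g \<rho>\<bar> + \<bar>a b - c b\<bar> * g \<rho>"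
      using a0[of b] g0[of \<rho>] by (simp add: abs_mult)
    finally show "\<bar>F (b#\<rho>) - G (b#\<rho>)\<bar> \<le> a b * \<bar>f \<rho> - g \<rho>\<bar> + \<bar>a b - c b\<bar> * g \<rho>" .
  qed
  also have "\<dots> = (\<Sum>b\<in>UNIV. a b * (\<Sum>\<rho>\<in>LL l. \<bar>f \<rho> - g \<rho>\<bar>)) + (\<Sum>b\<in>UNIV. \<bar>a b - c b\<bar> * (\<Sum>\<rho>\<in>LL l. g \<rho>))"
    by (simp add: sum.distrib sum_distrib_left)
  also have "\<dots> = (\<Sum>b\<in>UNIV. a b) * (\<Sum>\<rho>\<in>LL l. \<bar>f \<rho> - g \<rho>\<bar>) + (\<Sum>b\<in>UNIV. \<bar>a b - c b\<bar>) * (\<Sum>\<rho>\<in>LL l. g \<rho>)"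
    by (simp add: sum_distrib_right)
  also have "\<dots> = (\<Sum>\<rho>\<in>LL l. \<bar>f \<rho> - g \<rho>\<bar>) + (\<Sum>b\<in>UNIV. \<bar>a b - c b\<bar>)"
    using a1 g1 by simp
  finally have X: "(\<Sum>b\<in>UNIV. \<Sum>\<rho>\<in>LL l. \<bar>F (b#\<rho>) - G (b#\<rho>)\<bar>) \<le> (\<Sum>\<rho>\<in>LL l. \<bar>f \<rho> - g \<rho>\<bar>) + (\<Sum>b\<in>UNIV. \<bar>a b - c b\<bar>)" .
  show ?thesis unfolding tv_list_Suc[of l F G] tv_list_LL[of l f g] tv1_def using X by linarith
qed

definition Dd :: "((nat \<Rightarrow> 'a) \<Rightarrow> real) \<Rightarrow> (nat \<Rightarrow> 'a::finite) set \<Rightarrow> nat \<Rightarrow> nat list \<Rightarrow> real" where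
  "Dd \<mu> S y xs = tv_list (Suc (length xs)) (marg \<mu> S (y#xs)) (\<lambda>\<tau>. marg1 \<mu> S y (hd \<tau>) * marg \<mu> S xs (tl \<tau>))"

lemma Dd_nonneg: "0 \<le> Dd \<mu> S y xs" by (simp add: Dd_def tv_list_nonneg)

lemma tele_step:
  assumes "NN \<mu> S" "msr \<mu> S > 0"
  shows "tv_list (Suc (length xs)) (marg \<mu> S (y#xs)) (prod_marg \<mu> S (y#xs))
     \<le> Dd \<mu> (S :: (nat \<Rightarrow> 'a::finite) set) y xs + tv_list (length xs) (marg \<mu> S xs) (prod_marg \<mu> S xs)"
proof -
  have "tv_list (Suc (length xs)) (\<lambda>\<tau>. marg1 \<mu> S y (hd \<tau>) * marg \<mu> S xs (tl \<tau>)) (prod_marg \<mu> S (y#xs))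
     \<le> tv1 (marg1 \<mu> S y) (marg1 \<mu> S y) + tv_list (length xs) (marg \<mu> S xs) (prod_marg \<mu> S xs)"
    by (rule tv_prod_step) (auto simp: marg1_nonneg[OF assms(1)] sum_marg1[OF assms] prod_marg_nonneg[OF assms(1)]
        sum_prod_marg[OF assms] prod_marg_Cons)
  also have "tv1 (marg1 \<mu> S y) (marg1 \<mu> S y) = 0" by (simp add: tv1_def)
  finally show ?thesis using tv_list_triangle[of "Suc (length xs)" "marg \<mu> S (y#xs)" "prod_marg \<mu> S (y#xs)"
      "\<lambda>\<tau>. marg1 \<mu> S y (hd \<tau>) * marg \<mu> S xs (tl \<tau>)"] unfolding Dd_def by simp
qed

definition defect :: "nat \<Rightarrow> ((nat \<Rightarrow> 'a::finite) \<Rightarrow> real) \<Rightarrow> nat \<Rightarrow> (nat \<Rightarrow> 'a) set \<Rightarrow> real" where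
  "defect n \<mu> k S = (1 / real n ^ k) * (\<Sum>xs\<in>tuples n k. tv_list k (marg \<mu> S xs) (prod_marg \<mu> S xs))"

definition Bj :: "nat \<Rightarrow> ((nat \<Rightarrow> 'a::finite) \<Rightarrow> real) \<Rightarrow> nat \<Rightarrow> (nat \<Rightarrow> 'a) set \<Rightarrow> real" where
  "Bj n \<mu> j S = (1 / real n ^ Suc j) * (\<Sum>y<n. \<Sum>xs\<in>tuples n j. Dd \<mu> S y xs)"

lemma is_state_defect: "is_state n \<mu> \<delta> k S \<longleftrightarrow> S \<subseteq> cube n \<and> msr \<mu> S > 0 \<and> defect n \<mu> k S < \<delta>"
  by (simp add: is_state_def defect_def)

lemma defect_le:
  assumes "NN \<mu> S" "msr \<mu> S > 0" "n > 0"
  shows "defect n \<mu> k S \<le> (\<Sum>j<k. Bj n \<mu> j S)"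
proof (induction k)
  case 0
  then show ?case using assms by (simp add: defect_def tuples_0 tv_list_def marg_Nil)
next
  case (Suc k)
  have "(\<Sum>xs\<in>tuples n (Suc k). tv_list (Suc k) (marg \<mu> S xs) (prod_marg \<mu> S xs))
      = (\<Sum>y<n. \<Sum>xs\<in>tuples n k. tv_list (Suc (length xs)) (marg \<mu> S (y#xs)) (prod_marg \<mu> S (y#xs)))"
    unfolding sum_tuples_Suc by (intro sum.cong refl) (auto simp: tuples_def)
  also have "\<dots> \<le> (\<Sum>y<n. \<Sum>xs\<in>tuples n k. Dd \<mu> S y xs + tv_list (length xs) (marg \<mu> S xs) (prod_marg \<mu> S xs))"
    by (intro sum_mono tele_step assms)
  also have "\<dots> = (\<Sum>y<n. \<Sum>xs\<in>tuples n k. Dd \<mu> S y xs) + real n * (\<Sum>xs\<in>tuples n k. tv_list k (marg \<mu> S xs) (prod_marg \<mu> S xs))"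
  proof -
    have "(\<Sum>xs\<in>tuples n k. tv_list (length xs) (marg \<mu> S xs) (prod_marg \<mu> S xs)) = (\<Sum>xs\<in>tuples n k. tv_list k (marg \<mu> S xs) (prod_marg \<mu> S xs))"
      by (rule sum.cong) (auto simp: tuples_def)
    then show ?thesis by (simp add: sum.distrib)
  qed
  finally have "defect n \<mu> (Suc k) S \<le> (1 / real n ^ Suc k) * ((\<Sum>y<n. \<Sum>xs\<in>tuples n k. Dd \<mu> S y xs) + real n * (\<Sum>xs\<in>tuples n k. tv_list k (marg \<mu> S xs) (prod_marg \<mu> S xs)))"
    unfolding defect_def by (simp add: divide_right_mono)
  also have "\<dots> = Bj n \<mu> k S + defect n \<mu> k S"
    using assms(3) by (simp add: Bj_def defect_def field_simps)
  finally show ?case using Suc by simp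
qed

definition Q :: "((nat \<Rightarrow> 'a) \<Rightarrow> real) \<Rightarrow> (nat \<Rightarrow> 'a::finite) set \<Rightarrow> nat list \<Rightarrow> real" where
  "Q \<mu> S xs = (\<Sum>\<rho>\<in>LL (length xs). (W \<mu> S xs \<rho>)\<^sup>2 / msr \<mu> S)"

lemma Q_nonneg: "NN \<mu> S \<Longrightarrow> 0 \<le> Q \<mu> S xs"
  unfolding Q_def by (auto intro!: sum_nonneg divide_nonneg_nonneg msr_nonneg)

lemma Q_le: assumes "NN \<mu> S" shows "Q \<mu> (S :: (nat \<Rightarrow> 'a::finite) set) xs \<le> msr \<mu> S"
proof (cases "msr \<mu> S = 0")
  case True then show ?thesis by (simp add: Q_def)
next
  case False
  then have m: "msr \<mu> S > 0" using msr_nonneg[OF assms] by simp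
  have "Q \<mu> S xs \<le> (\<Sum>\<rho>\<in>LL (length xs). W \<mu> S xs \<rho>)"
    unfolding Q_def
  proof (rule sum_mono)
    fix \<rho>
    have "(W \<mu> S xs \<rho>)\<^sup>2 \<le> W \<mu> S xs \<rho> * msr \<mu> S"
      unfolding power2_eq_square by (rule mult_left_mono[OF W_le_msr[OF assms] W_nonneg[OF assms]])
    then show "(W \<mu> S xs \<rho>)\<^sup>2 / msr \<mu> S \<le> W \<mu> S xs \<rho>" using m by (simp add: divide_le_eq)
  qed
  then show ?thesis using sum_W[OF assms] by simp
qed

lemma W_Nil: "W \<mu> T [] [] = msr \<mu> T" by (simp add: W_def msr_def)

lemma amgm: assumes "(g::real) > 0" "mb > 0" shows "\<bar>e\<bar> \<le> g * mb / 2 + e\<^sup>2 / (2 * g * mb)"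
proof -
  have "0 \<le> (\<bar>e\<bar> - g * mb)\<^sup>2" by simp
  then have f: "2 * g * mb * \<bar>e\<bar> \<le> e\<^sup>2 + (g*mb)\<^sup>2" by (simp add: power2_eq_square algebra_simps)
  have gm: "0 < g * mb" using assms by simp
  have "(2*\<bar>e\<bar> - g*mb)*(g*mb) \<le> e\<^sup>2" using f by (simp add: algebra_simps power2_eq_square)
  then have "2*\<bar>e\<bar> - g*mb \<le> e\<^sup>2/(g*mb)" using gm by (simp add: pos_le_divide_eq)
  moreover have "e\<^sup>2/(2*g*mb) = e\<^sup>2/(g*mb)/2" by simp
  ultimately show ?thesis by linarith
qed

lemma key_ineq:
  fixes S :: "(nat \<Rightarrow> 'a::finite) set"
  assumes NN: "NN \<mu> S" and g: "\<gamma> > 0"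
  shows "msr \<mu> S * Dd \<mu> S y xs \<le> \<gamma> * msr \<mu> S * real (card (UNIV::'a set)) ^ length xs / 4
     + ((\<Sum>b\<in>UNIV. Q \<mu> {\<sigma>\<in>S. \<sigma> y = b} xs) - Q \<mu> S xs) / (4 * \<gamma>)"
proof (cases "msr \<mu> S = 0")
  case True
  have "0 \<le> (\<Sum>b\<in>UNIV. Q \<mu> {\<sigma>\<in>S. \<sigma> y = b} xs)"
    by (intro sum_nonneg Q_nonneg NN_subset[OF NN]) auto
  then show ?thesis using True g by (simp add: Q_def)
next
  case False
  have fin: "finite S" using NN by (simp add: NN_def)
  define m where "m = msr \<mu> S"
  have m: "m > 0" using False msr_nonneg[OF NN] by (simp add: m_def)
  define l where "l = length xs"
  define mb where "mb b = msr \<mu> {\<sigma>\<in>S. \<sigma> y = b}" for b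
  define Wb where "Wb b \<rho> = W \<mu> {\<sigma>\<in>S. \<sigma> y = b} xs \<rho>" for b \<rho>
  define Ws where "Ws \<rho> = W \<mu> S xs \<rho>" for \<rho>
  define e where "e b \<rho> = Wb b \<rho> - mb b * Ws \<rho> / m" for b \<rho>
  have NNb: "NN \<mu> {\<sigma>\<in>S. \<sigma> y = b}" for b by (rule NN_subset[OF NN]) auto
  have mb0: "0 \<le> mb b" for b unfolding mb_def by (rule msr_nonneg[OF NNb])
  have Wb0: "0 \<le> Wb b \<rho>" for b \<rho> unfolding Wb_def by (rule W_nonneg[OF NNb])
  have Wbm: "Wb b \<rho> \<le> mb b" for b \<rho> unfolding Wb_def mb_def by (rule W_le_msr[OF NNb])
  have summb: "(\<Sum>b\<in>UNIV. mb b) = m" unfolding mb_def m_def by (rule sum_msr_split[OF fin])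
  have sumWb: "(\<Sum>b\<in>UNIV. Wb b \<rho>) = Ws \<rho>" for \<rho> unfolding Wb_def Ws_def by (rule sum_W_split[OF fin])
  have cardL: "card (LL l :: 'a list set) = card (UNIV::'a set) ^ l" by (rule card_LL)
  have "m * Dd \<mu> S y xs = m * ((\<Sum>b\<in>UNIV. \<Sum>\<rho>\<in>LL l. \<bar>Wb b \<rho> / m - mb b / m * (Ws \<rho> / m)\<bar>) / 2)"
    unfolding Dd_def tv_list_Suc l_def
    by (simp add: marg_W W_Cons[OF fin] marg1_marg W_Nil Wb_def mb_def Ws_def m_def)
  also have "\<dots> = (\<Sum>b\<in>UNIV. \<Sum>\<rho>\<in>LL l. \<bar>e b \<rho>\<bar>) / 2"
  proof -
    have "m * \<bar>Wb b \<rho> / m - mb b / m * (Ws \<rho> / m)\<bar> = \<bar>e b \<rho>\<bar>" for b \<rho>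
    proof -
      have "m * \<bar>Wb b \<rho> / m - mb b / m * (Ws \<rho> / m)\<bar> = \<bar>m * (Wb b \<rho> / m - mb b / m * (Ws \<rho> / m))\<bar>"
        using m by (simp add: abs_mult)
      also have "m * (Wb b \<rho> / m - mb b / m * (Ws \<rho> / m)) = e b \<rho>"
        using m by (simp add: e_def field_simps)
      finally show ?thesis .
    qed
    then show ?thesis by (simp add: sum_distrib_left)
  qed
  finally have step1: "m * Dd \<mu> S y xs = (\<Sum>b\<in>UNIV. \<Sum>\<rho>\<in>LL l. \<bar>e b \<rho>\<bar>) / 2" .
  have pw: "\<bar>e b \<rho>\<bar> \<le> \<gamma> * mb b / 2 + (e b \<rho>)\<^sup>2 / (2 * \<gamma> * mb b)" for b \<rho>
  proof (cases "mb b = 0")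
    case True
    then have "Wb b \<rho> = 0" using Wb0[of b \<rho>] Wbm[of b \<rho>] by simp
    then show ?thesis using True by (simp add: e_def)
  next
    case False
    then show ?thesis using amgm[OF g, of "mb b"] mb0[of b] by simp
  qed
  have "(\<Sum>b\<in>UNIV. \<Sum>\<rho>\<in>LL l. \<bar>e b \<rho>\<bar>) \<le> (\<Sum>b\<in>UNIV. \<Sum>\<rho>\<in>LL l. \<gamma> * mb b / 2 + (e b \<rho>)\<^sup>2 / (2 * \<gamma> * mb b))"
    by (intro sum_mono pw)
  also have "\<dots> = \<gamma> / 2 * (\<Sum>b\<in>UNIV. mb b) * real (card (LL l :: 'a list set)) + (\<Sum>b\<in>UNIV. \<Sum>\<rho>\<in>LL l. (e b \<rho>)\<^sup>2 / mb b) / (2 * \<gamma>)"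
    by (simp add: sum.distrib sum_distrib_left sum_distrib_right sum_divide_distrib algebra_simps)
  finally have step2: "(\<Sum>b\<in>UNIV. \<Sum>\<rho>\<in>LL l. \<bar>e b \<rho>\<bar>) \<le> \<gamma> / 2 * m * real (card (UNIV::'a set)) ^ l + (\<Sum>b\<in>UNIV. \<Sum>\<rho>\<in>LL l. (e b \<rho>)\<^sup>2 / mb b) / (2 * \<gamma>)"
    using summb cardL by simp
  have pe: "(e b \<rho>)\<^sup>2 / mb b = (Wb b \<rho>)\<^sup>2 / mb b - 2 * Wb b \<rho> * Ws \<rho> / m + mb b * (Ws \<rho>)\<^sup>2 / m\<^sup>2" for b \<rho>
  proof (cases "mb b = 0")
    case True
    then have "Wb b \<rho> = 0" using Wb0[of b \<rho>] Wbm[of b \<rho>] by simp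
    then show ?thesis using True by (simp add: e_def)
  next
    case False
    then show ?thesis using m by (simp add: e_def field_simps power2_eq_square)
  qed
  have "(\<Sum>b\<in>UNIV. \<Sum>\<rho>\<in>LL l. (e b \<rho>)\<^sup>2 / mb b)
      = (\<Sum>b\<in>UNIV. \<Sum>\<rho>\<in>LL l. (Wb b \<rho>)\<^sup>2 / mb b) - (\<Sum>\<rho>\<in>LL l. 2 * (\<Sum>b\<in>UNIV. Wb b \<rho>) * Ws \<rho> / m)
        + (\<Sum>\<rho>\<in>LL l. (\<Sum>b\<in>UNIV. mb b) * (Ws \<rho>)\<^sup>2 / m\<^sup>2)"
    unfolding pe by (simp add: sum.distrib sum_subtractf sum_distrib_left sum_distrib_right sum_divide_distrib
        sum.swap[of _ UNIV "LL l"] algebra_simps)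
  also have "\<dots> = (\<Sum>b\<in>UNIV. Q \<mu> {\<sigma>\<in>S. \<sigma> y = b} xs) - Q \<mu> S xs"
  proof -
    have "(\<Sum>\<rho>\<in>LL l. 2 * (\<Sum>b\<in>UNIV. Wb b \<rho>) * Ws \<rho> / m) = 2 * Q \<mu> S xs"
      by (simp add: sumWb Q_def l_def Ws_def m_def power2_eq_square sum_distrib_left) (intro sum.cong refl, simp)
    moreover have "(\<Sum>\<rho>\<in>LL l. (\<Sum>b\<in>UNIV. mb b) * (Ws \<rho>)\<^sup>2 / m\<^sup>2) = Q \<mu> S xs"
      unfolding summb Q_def l_def Ws_def m_def using m by (intro sum.cong refl) (simp add: power2_eq_square m_def)
    moreover have "(\<Sum>b\<in>UNIV. \<Sum>\<rho>\<in>LL l. (Wb b \<rho>)\<^sup>2 / mb b) = (\<Sum>b\<in>UNIV. Q \<mu> {\<sigma>\<in>S. \<sigma> y = b} xs)"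
      by (simp add: Q_def l_def Wb_def mb_def)
    ultimately show ?thesis by simp
  qed
  finally have step3: "(\<Sum>b\<in>UNIV. \<Sum>\<rho>\<in>LL l. (e b \<rho>)\<^sup>2 / mb b) = (\<Sum>b\<in>UNIV. Q \<mu> {\<sigma>\<in>S. \<sigma> y = b} xs) - Q \<mu> S xs" .
  have "m * Dd \<mu> S y xs \<le> (\<gamma> / 2 * m * real (card (UNIV::'a set)) ^ l + ((\<Sum>b\<in>UNIV. Q \<mu> {\<sigma>\<in>S. \<sigma> y = b} xs) - Q \<mu> S xs) / (2 * \<gamma>)) / 2"
    using step1 step2 step3 by simp
  moreover have "(\<gamma> / 2 * m * real (card (UNIV::'a set)) ^ l + ((\<Sum>b\<in>UNIV. Q \<mu> {\<sigma>\<in>S. \<sigma> y = b} xs) - Q \<mu> S xs) / (2 * \<gamma>)) / 2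
     = \<gamma> * m * real (card (UNIV::'a set)) ^ l / 4 + ((\<Sum>b\<in>UNIV. Q \<mu> {\<sigma>\<in>S. \<sigma> y = b} xs) - Q \<mu> S xs) / (4 * \<gamma>)"
    using g by (simp add: field_simps)
  ultimately show ?thesis by (simp add: m_def l_def)
qed

definition Gj :: "nat \<Rightarrow> ((nat \<Rightarrow> 'a::finite) \<Rightarrow> real) \<Rightarrow> nat \<Rightarrow> (nat \<Rightarrow> 'a) set \<Rightarrow> real" where
  "Gj n \<mu> j S = (1 / real n ^ j) * (\<Sum>xs\<in>tuples n j. Q \<mu> S xs)"

definition HH :: "nat \<Rightarrow> ((nat \<Rightarrow> 'a::finite) \<Rightarrow> real) \<Rightarrow> nat \<Rightarrow> (nat \<Rightarrow> 'a) set \<Rightarrow> real" where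
  "HH n \<mu> k S = (\<Sum>j<k. Gj n \<mu> j S)"

definition KK :: "nat \<Rightarrow> nat \<Rightarrow> real" where
  "KK c k = (\<Sum>j<k. real c ^ j)"

lemma Gj_nonneg: "NN \<mu> S \<Longrightarrow> 0 \<le> Gj n \<mu> j S"
  unfolding Gj_def by (intro mult_nonneg_nonneg sum_nonneg Q_nonneg) auto

lemma Gj_le: assumes "NN \<mu> S" "n > 0" shows "Gj n \<mu> j S \<le> msr \<mu> S"
proof -
  have "(\<Sum>xs\<in>tuples n j. Q \<mu> S xs) \<le> (\<Sum>xs\<in>tuples n j. msr \<mu> S)"
    by (intro sum_mono Q_le assms)
  also have "\<dots> = real n ^ j * msr \<mu> S" by (simp add: card_tuples)
  finally show ?thesis using assms(2) unfolding Gj_def by (simp add: field_simps)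
qed

lemma HH_nonneg: "NN \<mu> S \<Longrightarrow> 0 \<le> HH n \<mu> k S"
  unfolding HH_def by (auto intro!: sum_nonneg Gj_nonneg)

lemma HH_le: assumes "NN \<mu> S" "n > 0" shows "HH n \<mu> k S \<le> real k * msr \<mu> S"
proof -
  have "HH n \<mu> k S \<le> (\<Sum>j<k. msr \<mu> S)" unfolding HH_def by (intro sum_mono Gj_le assms)
  then show ?thesis by simp
qed

lemma HH_zero: "msr \<mu> S = 0 \<Longrightarrow> HH n \<mu> k S = 0"
  by (simp add: HH_def Gj_def Q_def)

lemma Bj_ineq:
  fixes S :: "(nat \<Rightarrow> 'a::finite) set"
  assumes NN: "NN \<mu> S" and g: "\<gamma> > 0" and n: "n > 0"
  shows "msr \<mu> S * Bj n \<mu> j S \<le> \<gamma> * msr \<mu> S * real (card (UNIV::'a set)) ^ j / 4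
     + ((1 / real n) * (\<Sum>y<n. \<Sum>b\<in>UNIV. Gj n \<mu> j {\<sigma>\<in>S. \<sigma> y = b}) - Gj n \<mu> j S) / (4 * \<gamma>)"
proof -
  define c where "c = real (card (UNIV::'a set))"
  define N where "N = real n"
  have N: "N > 0" using n by (simp add: N_def)
  have "msr \<mu> S * Bj n \<mu> j S = (1 / N ^ Suc j) * (\<Sum>y<n. \<Sum>xs\<in>tuples n j. msr \<mu> S * Dd \<mu> S y xs)"
    by (simp add: Bj_def N_def sum_distrib_left)
  also have "\<dots> \<le> (1 / N ^ Suc j) * (\<Sum>y<n. \<Sum>xs\<in>tuples n j. \<gamma> * msr \<mu> S * c ^ j / 4
     + ((\<Sum>b\<in>UNIV. Q \<mu> {\<sigma>\<in>S. \<sigma> y = b} xs) - Q \<mu> S xs) / (4 * \<gamma>))"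
  proof -
    have "(\<Sum>y<n. \<Sum>xs\<in>tuples n j. msr \<mu> S * Dd \<mu> S y xs) \<le> (\<Sum>y<n. \<Sum>xs\<in>tuples n j. \<gamma> * msr \<mu> S * c ^ j / 4
     + ((\<Sum>b\<in>UNIV. Q \<mu> {\<sigma>\<in>S. \<sigma> y = b} xs) - Q \<mu> S xs) / (4 * \<gamma>))"
    proof (intro sum_mono)
      fix y xs assume "xs \<in> tuples n j"
      then have "length xs = j" by (simp add: tuples_def)
      then show "msr \<mu> S * Dd \<mu> S y xs \<le> \<gamma> * msr \<mu> S * c ^ j / 4
     + ((\<Sum>b\<in>UNIV. Q \<mu> {\<sigma>\<in>S. \<sigma> y = b} xs) - Q \<mu> S xs) / (4 * \<gamma>)"
        using key_ineq[OF NN g, of y xs] by (simp add: c_def)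
    qed
    then show ?thesis using N by (simp add: divide_right_mono)
  qed
  also have "\<dots> = \<gamma> * msr \<mu> S * c ^ j / 4 + ((1 / N) * (\<Sum>y<n. \<Sum>b\<in>UNIV. Gj n \<mu> j {\<sigma>\<in>S. \<sigma> y = b}) - Gj n \<mu> j S) / (4 * \<gamma>)"
  proof -
    have s1: "(\<Sum>y<n. \<Sum>xs\<in>tuples n j. \<gamma> * msr \<mu> S * c ^ j / 4) = N ^ Suc j * (\<gamma> * msr \<mu> S * c ^ j / 4)"
      by (simp add: card_tuples N_def)
    have s2: "(\<Sum>y<n. \<Sum>xs\<in>tuples n j. \<Sum>b\<in>UNIV. Q \<mu> {\<sigma>\<in>S. \<sigma> y = b} xs) = N ^ j * (\<Sum>y<n. \<Sum>b\<in>UNIV. Gj n \<mu> j {\<sigma>\<in>S. \<sigma> y = b})"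
      unfolding Gj_def using N
      by (simp add: sum_distrib_left sum.swap[of _ "tuples n j" UNIV] N_def)
    have s3: "(\<Sum>y<n. \<Sum>xs\<in>tuples n j. Q \<mu> S xs) = N ^ Suc j * Gj n \<mu> j S"
      unfolding Gj_def using N by (simp add: N_def)
    have e: "(\<Sum>y<n. \<Sum>xs\<in>tuples n j. \<gamma> * msr \<mu> S * c ^ j / 4
     + ((\<Sum>b\<in>UNIV. Q \<mu> {\<sigma>\<in>S. \<sigma> y = b} xs) - Q \<mu> S xs) / (4 * \<gamma>))
      = (\<Sum>y<n. \<Sum>xs\<in>tuples n j. \<gamma> * msr \<mu> S * c ^ j / 4) + ((\<Sum>y<n. \<Sum>xs\<in>tuples n j. \<Sum>b\<in>UNIV. Q \<mu> {\<sigma>\<in>S. \<sigma> y = b} xs) - (\<Sum>y<n. \<Sum>xs\<in>tuples n j. Q \<mu> S xs)) / (4 * \<gamma>)"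
      by (simp only: sum.distrib sum_subtractf sum_divide_distrib diff_divide_distrib)
    have "(\<Sum>y<n. \<Sum>xs\<in>tuples n j. \<gamma> * msr \<mu> S * c ^ j / 4
     + ((\<Sum>b\<in>UNIV. Q \<mu> {\<sigma>\<in>S. \<sigma> y = b} xs) - Q \<mu> S xs) / (4 * \<gamma>))
      = N ^ Suc j * (\<gamma> * msr \<mu> S * c ^ j / 4) + (N ^ j * (\<Sum>y<n. \<Sum>b\<in>UNIV. Gj n \<mu> j {\<sigma>\<in>S. \<sigma> y = b}) - N ^ Suc j * Gj n \<mu> j S) / (4 * \<gamma>)"
      unfolding e s1 s2 s3 ..
    then show ?thesis using N g by (simp add: field_simps)
  qed
  finally show ?thesis by (simp add: c_def N_def)
qed

lemma cell_ineq:
  fixes S :: "(nat \<Rightarrow> 'a::finite) set"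
  assumes NN: "NN \<mu> S" and g: "\<gamma> > 0" and n: "n > 0"
  shows "msr \<mu> S * defect n \<mu> k S \<le> \<gamma> * msr \<mu> S * KK (card (UNIV::'a set)) k / 4
     + ((1 / real n) * (\<Sum>y<n. \<Sum>b\<in>UNIV. HH n \<mu> k {\<sigma>\<in>S. \<sigma> y = b}) - HH n \<mu> k S) / (4 * \<gamma>)"
proof (cases "msr \<mu> S = 0")
  case True
  have "0 \<le> (\<Sum>y<n. \<Sum>b\<in>UNIV. HH n \<mu> k {\<sigma>\<in>S. \<sigma> y = b})"
    by (intro sum_nonneg HH_nonneg NN_subset[OF NN]) auto
  then show ?thesis using True g HH_zero[OF True] by simp
next
  case False
  then have m: "msr \<mu> S > 0" using msr_nonneg[OF NN] by simp
  have "msr \<mu> S * defect n \<mu> k S \<le> msr \<mu> S * (\<Sum>j<k. Bj n \<mu> j S)"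
    using defect_le[OF NN m n] m by (simp add: mult_left_mono)
  also have "\<dots> = (\<Sum>j<k. msr \<mu> S * Bj n \<mu> j S)" by (simp add: sum_distrib_left)
  also have "\<dots> \<le> (\<Sum>j<k. \<gamma> * msr \<mu> S * real (card (UNIV::'a set)) ^ j / 4
     + ((1 / real n) * (\<Sum>y<n. \<Sum>b\<in>UNIV. Gj n \<mu> j {\<sigma>\<in>S. \<sigma> y = b}) - Gj n \<mu> j S) / (4 * \<gamma>))"
    by (intro sum_mono Bj_ineq NN g n)
  also have "\<dots> = \<gamma> * msr \<mu> S * KK (card (UNIV::'a set)) k / 4
     + ((1 / real n) * (\<Sum>y<n. \<Sum>b\<in>UNIV. HH n \<mu> k {\<sigma>\<in>S. \<sigma> y = b}) - HH n \<mu> k S) / (4 * \<gamma>)"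
    unfolding KK_def HH_def
    by (simp add: sum.distrib sum_subtractf sum_divide_distrib sum_distrib_left sum_distrib_right
        sum.swap[of _ "{..<k}"] diff_divide_distrib)
  finally show ?thesis .
qed

definition Cl :: "nat \<Rightarrow> nat list \<Rightarrow> 'a list \<Rightarrow> (nat \<Rightarrow> 'a::finite) set" where
  "Cl n ys \<tau> = {\<sigma>\<in>cube n. map \<sigma> ys = \<tau>}"

lemma finite_cube[simp]: "finite (cube n :: (nat \<Rightarrow> 'a::finite) set)"
  unfolding cube_def by (rule finite_PiE) auto

lemma Cl_Cons: "Cl n (y#ys) (b#\<tau>) = {\<sigma>\<in>Cl n ys \<tau>. \<sigma> y = b}"
  unfolding Cl_def by auto

lemma Cl_sub: "Cl n ys \<tau> \<subseteq> cube n" unfolding Cl_def by auto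

lemma NN_cube: "is_prob n \<mu> \<Longrightarrow> NN \<mu> (cube n)"
  unfolding is_prob_def NN_def by simp

lemma NN_Cl: "is_prob n \<mu> \<Longrightarrow> NN \<mu> (Cl n ys \<tau>)"
  using NN_subset[OF NN_cube Cl_sub] .

lemma msr_Cl: "msr \<mu> (Cl n ys \<tau>) = W \<mu> (cube n) ys \<tau>"
  unfolding msr_def W_def Cl_def by (simp add: sum.inter_filter)

lemma sum_msr_Cl: assumes "is_prob n \<mu>" "length ys = t"
  shows "(\<Sum>\<tau>\<in>LL t. msr \<mu> (Cl n ys \<tau> :: (nat \<Rightarrow> 'a::finite) set)) = 1"
  using sum_W[OF NN_cube[OF assms(1)], of ys] assms unfolding msr_Cl
  by (simp add: is_prob_def msr_def)

definition Psi :: "nat \<Rightarrow> ((nat \<Rightarrow> 'a::finite) \<Rightarrow> real) \<Rightarrow> nat \<Rightarrow> nat \<Rightarrow> real" where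
  "Psi n \<mu> k t = (1 / real n ^ t) * (\<Sum>ys\<in>tuples n t. \<Sum>\<tau>\<in>LL t. HH n \<mu> k (Cl n ys \<tau>))"

definition Xi :: "nat \<Rightarrow> ((nat \<Rightarrow> 'a::finite) \<Rightarrow> real) \<Rightarrow> nat \<Rightarrow> nat \<Rightarrow> real" where
  "Xi n \<mu> k t = (1 / real n ^ t) * (\<Sum>ys\<in>tuples n t. \<Sum>\<tau>\<in>LL t. msr \<mu> (Cl n ys \<tau>) * defect n \<mu> k (Cl n ys \<tau>))"

lemma Psi_nonneg: "is_prob n \<mu> \<Longrightarrow> 0 \<le> Psi n \<mu> k t"
  unfolding Psi_def by (intro mult_nonneg_nonneg sum_nonneg HH_nonneg NN_Cl) auto

lemma Psi_le: assumes "is_prob n \<mu>" "n > 0" shows "Psi n \<mu> k t \<le> real k"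
proof -
  have "(\<Sum>ys\<in>tuples n t. \<Sum>\<tau>\<in>LL t. HH n \<mu> k (Cl n ys \<tau>)) \<le> (\<Sum>ys\<in>tuples n t. \<Sum>\<tau>\<in>LL t. real k * msr \<mu> (Cl n ys \<tau>))"
    by (intro sum_mono HH_le NN_Cl assms)
  also have "\<dots> = (\<Sum>ys\<in>tuples n t. real k)"
    by (intro sum.cong refl) (simp add: sum_distrib_left[symmetric] sum_msr_Cl[OF assms(1)] tuples_def)
  also have "\<dots> = real n ^ t * real k" by (simp add: card_tuples)
  finally show ?thesis using assms(2) unfolding Psi_def by (simp add: field_simps)
qed

lemma Xi_step:
  assumes P: "is_prob n (\<mu> :: (nat \<Rightarrow> 'a::finite) \<Rightarrow> real)" and n: "n > 0" and g: "\<gamma> > 0"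
  shows "Xi n \<mu> k t \<le> \<gamma> * KK (card (UNIV::'a set)) k / 4 + (Psi n \<mu> k (Suc t) - Psi n \<mu> k t) / (4 * \<gamma>)"
proof -
  define N where "N = real n"
  have N: "N > 0" using n by (simp add: N_def)
  define K where "K = KK (card (UNIV::'a set)) k"
  have "(\<Sum>ys\<in>tuples n t. \<Sum>\<tau>\<in>LL t. msr \<mu> (Cl n ys \<tau>) * defect n \<mu> k (Cl n ys \<tau>))
     \<le> (\<Sum>ys\<in>tuples n t. \<Sum>\<tau>\<in>LL t. \<gamma> * msr \<mu> (Cl n ys \<tau>) * K / 4
     + ((1 / N) * (\<Sum>y<n. \<Sum>b\<in>UNIV. HH n \<mu> k (Cl n (y#ys) (b#\<tau>))) - HH n \<mu> k (Cl n ys \<tau>)) / (4 * \<gamma>))"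
    unfolding Cl_Cons K_def N_def by (intro sum_mono cell_ineq NN_Cl P g n)
  also have "\<dots> = N ^ t * (\<gamma> * K / 4) + ((1 / N) * (N ^ Suc t * Psi n \<mu> k (Suc t)) - N ^ t * Psi n \<mu> k t) / (4 * \<gamma>)"
  proof -
    have s1: "(\<Sum>ys\<in>tuples n t. \<Sum>\<tau>\<in>LL t. \<gamma> * msr \<mu> (Cl n ys \<tau>) * K / 4) = N ^ t * (\<gamma> * K / 4)"
    proof -
      have "(\<Sum>ys\<in>tuples n t. \<Sum>\<tau>\<in>LL t. \<gamma> * msr \<mu> (Cl n ys \<tau>) * K / 4) = (\<Sum>ys\<in>tuples n t. \<gamma> * K / 4)"
        by (intro sum.cong refl)
          (simp add: sum_divide_distrib[symmetric] sum_distrib_left[symmetric] sum_distrib_right[symmetric] sum_msr_Cl[OF P] tuples_def)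
      then show ?thesis by (simp add: card_tuples N_def)
    qed
    have s2: "(\<Sum>ys\<in>tuples n t. \<Sum>\<tau>\<in>LL t. (1 / N) * (\<Sum>y<n. \<Sum>b\<in>UNIV. HH n \<mu> k (Cl n (y#ys) (b#\<tau>))))
        = (1 / N) * (N ^ Suc t * Psi n \<mu> k (Suc t))"
    proof -
      have "(\<Sum>ys\<in>tuples n t. \<Sum>\<tau>\<in>LL t. \<Sum>y<n. \<Sum>b\<in>UNIV. HH n \<mu> k (Cl n (y#ys) (b#\<tau>)))
          = (\<Sum>y<n. \<Sum>ys\<in>tuples n t. \<Sum>b\<in>UNIV. \<Sum>\<tau>\<in>LL t. HH n \<mu> k (Cl n (y#ys) (b#\<tau>)))"
      proof -
        have "(\<Sum>ys\<in>tuples n t. \<Sum>\<tau>\<in>LL t. \<Sum>y<n. \<Sum>b\<in>UNIV. HH n \<mu> k (Cl n (y#ys) (b#\<tau>)))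
          = (\<Sum>ys\<in>tuples n t. \<Sum>y<n. \<Sum>\<tau>\<in>LL t. \<Sum>b\<in>UNIV. HH n \<mu> k (Cl n (y#ys) (b#\<tau>)))"
          by (intro sum.cong refl) (rule sum.swap)
        also have "\<dots> = (\<Sum>ys\<in>tuples n t. \<Sum>y<n. \<Sum>b\<in>UNIV. \<Sum>\<tau>\<in>LL t. HH n \<mu> k (Cl n (y#ys) (b#\<tau>)))"
          by (intro sum.cong refl) (rule sum.swap)
        also have "\<dots> = (\<Sum>y<n. \<Sum>ys\<in>tuples n t. \<Sum>b\<in>UNIV. \<Sum>\<tau>\<in>LL t. HH n \<mu> k (Cl n (y#ys) (b#\<tau>)))"
          by (rule sum.swap)
        finally show ?thesis .
      qed
      also have "\<dots> = (\<Sum>ys\<in>tuples n (Suc t). \<Sum>\<tau>\<in>LL (Suc t). HH n \<mu> k (Cl n ys \<tau>))"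
        by (simp add: sum_tuples_Suc sum_LL_Suc)
      also have "\<dots> = N ^ Suc t * Psi n \<mu> k (Suc t)"
        unfolding Psi_def using N by (simp add: N_def)
      finally have X: "(\<Sum>ys\<in>tuples n t. \<Sum>\<tau>\<in>LL t. \<Sum>y<n. \<Sum>b\<in>UNIV. HH n \<mu> k (Cl n (y#ys) (b#\<tau>))) = N ^ Suc t * Psi n \<mu> k (Suc t)" .
      have "(\<Sum>ys\<in>tuples n t. \<Sum>\<tau>\<in>LL t. (1 / N) * (\<Sum>y<n. \<Sum>b\<in>UNIV. HH n \<mu> k (Cl n (y#ys) (b#\<tau>))))
        = (1 / N) * (\<Sum>ys\<in>tuples n t. \<Sum>\<tau>\<in>LL t. \<Sum>y<n. \<Sum>b\<in>UNIV. HH n \<mu> k (Cl n (y#ys) (b#\<tau>)))"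
        by (simp only: sum_distrib_left)
      then show ?thesis using X by simp
    qed
    have s3: "(\<Sum>ys\<in>tuples n t. \<Sum>\<tau>\<in>LL t. HH n \<mu> k (Cl n ys \<tau>)) = N ^ t * Psi n \<mu> k t"
      unfolding Psi_def using N by (simp add: N_def)
    show ?thesis
      unfolding s1[symmetric] s2[symmetric] s3[symmetric]
      by (simp only: sum.distrib sum_subtractf sum_divide_distrib diff_divide_distrib)
  qed
  finally have "N ^ t * Xi n \<mu> k t \<le> N ^ t * (\<gamma> * K / 4) + ((1 / N) * (N ^ Suc t * Psi n \<mu> k (Suc t)) - N ^ t * Psi n \<mu> k t) / (4 * \<gamma>)"
    unfolding Xi_def using N by (simp add: N_def)
  also have "\<dots> = N ^ t * (\<gamma> * K / 4 + (Psi n \<mu> k (Suc t) - Psi n \<mu> k t) / (4 * \<gamma>))"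
    using N g by (simp add: field_simps)
  finally show ?thesis using N unfolding K_def by simp
qed

lemma exists_good_t:
  assumes P: "is_prob n (\<mu> :: (nat \<Rightarrow> 'a::finite) \<Rightarrow> real)" and n: "n > 0" and g: "\<gamma> > 0" and T: "T > 0"
  shows "\<exists>t<T. Xi n \<mu> k t \<le> \<gamma> * KK (card (UNIV::'a set)) k / 4 + real k / (4 * \<gamma> * real T)"
proof (rule ccontr)
  define K where "K = KK (card (UNIV::'a set)) k"
  define b where "b = \<gamma> * K / 4 + real k / (4 * \<gamma> * real T)"
  assume "\<not> ?thesis"
  then have lt: "\<And>t. t < T \<Longrightarrow> b < Xi n \<mu> k t" by (auto simp: b_def K_def not_le)
  have "(\<Sum>t<T. b) < (\<Sum>t<T. Xi n \<mu> k t)"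
    using T by (intro sum_strict_mono lt) auto
  also have "\<dots> \<le> (\<Sum>t<T. \<gamma> * K / 4 + (Psi n \<mu> k (Suc t) - Psi n \<mu> k t) / (4 * \<gamma>))"
    unfolding K_def by (intro sum_mono Xi_step P n g)
  also have "\<dots> = real T * (\<gamma> * K / 4) + (Psi n \<mu> k T - Psi n \<mu> k 0) / (4 * \<gamma>)"
    by (simp add: sum.distrib sum_divide_distrib[symmetric] sum_lessThan_telescope)
  also have "\<dots> \<le> real T * (\<gamma> * K / 4) + real k / (4 * \<gamma>)"
    using Psi_le[OF P n, of k T] Psi_nonneg[OF P, of k 0] g by (simp add: divide_right_mono)
  also have "\<dots> = (\<Sum>t<T. b)" using T g by (simp add: b_def field_simps)
  finally show False by simp
qed

lemma sum_Cl_partition: assumes "length ys = t"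
  shows "(\<Sum>\<tau>\<in>LL t. \<Sum>\<sigma>\<in>Cl n ys \<tau>. g \<sigma>) = (\<Sum>\<sigma>\<in>(cube n :: (nat \<Rightarrow> 'a::finite) set). g \<sigma>)"
proof -
  have "(\<Sum>\<tau>\<in>LL t. \<Sum>\<sigma>\<in>Cl n ys \<tau>. g \<sigma>) = (\<Sum>\<tau>\<in>LL t. \<Sum>\<sigma>\<in>cube n. if map \<sigma> ys = \<tau> then g \<sigma> else 0)"
    unfolding Cl_def by (simp add: sum.inter_filter)
  also have "\<dots> = (\<Sum>\<sigma>\<in>cube n. \<Sum>\<tau>\<in>LL t. if map \<sigma> ys = \<tau> then g \<sigma> else 0)" by (rule sum.swap)
  also have "\<dots> = (\<Sum>\<sigma>\<in>cube n. g \<sigma>)"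
  proof (rule sum.cong[OF refl])
    fix \<sigma> :: "nat \<Rightarrow> 'a"
    have "map \<sigma> ys \<in> LL t" using assms by (simp add: LL_def)
    then show "(\<Sum>\<tau>\<in>LL t. if map \<sigma> ys = \<tau> then g \<sigma> else 0) = g \<sigma>" by (simp add: sum.delta)
  qed
  finally show ?thesis .
qed

lemma msr_marg: "NN \<mu> S \<Longrightarrow> msr \<mu> S * marg \<mu> S xs \<rho> = W \<mu> S xs \<rho>"
proof (cases "msr \<mu> S = 0")
  case True
  assume N: "NN \<mu> S"
  have "W \<mu> S xs \<rho> = 0" using W_nonneg[OF N, of xs \<rho>] W_le_msr[OF N, of xs \<rho>] True by linarith
  then show ?thesis using True by simp
next
  case False
  then show ?thesis by (simp add: marg_W)
qed

lemma msr_cube: "is_prob n \<mu> \<Longrightarrow> msr \<mu> (cube n) = 1" by (simp add: is_prob_def msr_def)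

lemma marg_cube_mix: assumes P: "is_prob n \<mu>" and len: "length ys = t"
  shows "marg \<mu> (cube n) xs \<rho> = (\<Sum>\<tau>\<in>LL t. msr \<mu> (Cl n ys \<tau>) * marg \<mu> (Cl n ys \<tau>) xs \<rho>)"
proof -
  have "marg \<mu> (cube n) xs \<rho> = W \<mu> (cube n) xs \<rho>" by (simp add: marg_W msr_cube[OF P])
  also have "\<dots> = (\<Sum>\<tau>\<in>LL t. W \<mu> (Cl n ys \<tau>) xs \<rho>)"
    unfolding W_def by (rule sum_Cl_partition[OF len, symmetric])
  also have "\<dots> = (\<Sum>\<tau>\<in>LL t. msr \<mu> (Cl n ys \<tau>) * marg \<mu> (Cl n ys \<tau>) xs \<rho>)"
    by (simp add: msr_marg NN_Cl[OF P])
  finally show ?thesis .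
qed

lemma marg1_cube_mix: assumes P: "is_prob n \<mu>" and len: "length ys = t"
  shows "marg1 \<mu> (cube n) x a = (\<Sum>\<tau>\<in>LL t. msr \<mu> (Cl n ys \<tau>) * marg1 \<mu> (Cl n ys \<tau>) x a)"
  unfolding marg1_marg by (rule marg_cube_mix[OF P len])

lemma tv_list_convex:
  assumes fin: "finite I" and m0: "\<And>i. i \<in> I \<Longrightarrow> 0 \<le> m i" and m1: "(\<Sum>i\<in>I. m i) = 1"
  shows "tv_list l (\<lambda>\<rho>. \<Sum>i\<in>I. m i * p i \<rho>) q \<le> (\<Sum>i\<in>I. m i * tv_list l (p i) (q :: 'a::finite list \<Rightarrow> real))"
proof -
  have "(\<Sum>\<rho>\<in>LL l. \<bar>(\<Sum>i\<in>I. m i * p i \<rho>) - q \<rho>\<bar>) \<le> (\<Sum>\<rho>\<in>LL l. \<Sum>i\<in>I. m i * \<bar>p i \<rho> - q \<rho>\<bar>)"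
  proof (rule sum_mono)
    fix \<rho>
    have "(\<Sum>i\<in>I. m i * p i \<rho>) - q \<rho> = (\<Sum>i\<in>I. m i * (p i \<rho> - q \<rho>))"
      using m1 by (simp add: right_diff_distrib sum_subtractf sum_distrib_right[symmetric])
    also have "\<bar>\<dots>\<bar> \<le> (\<Sum>i\<in>I. \<bar>m i * (p i \<rho> - q \<rho>)\<bar>)" by (rule sum_abs)
    also have "\<dots> = (\<Sum>i\<in>I. m i * \<bar>p i \<rho> - q \<rho>\<bar>)" using m0 by (intro sum.cong refl) (simp add: abs_mult)
    finally show "\<bar>(\<Sum>i\<in>I. m i * p i \<rho>) - q \<rho>\<bar> \<le> (\<Sum>i\<in>I. m i * \<bar>p i \<rho> - q \<rho>\<bar>)" .
  qed
  also have "\<dots> = (\<Sum>i\<in>I. m i * (\<Sum>\<rho>\<in>LL l. \<bar>p i \<rho> - q \<rho>\<bar>))"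
    by (simp add: sum_distrib_left) (rule sum.swap)
  finally show ?thesis unfolding tv_list_LL
    by (simp add: sum_divide_distrib[symmetric] divide_right_mono)
qed

lemma tv1_convex:
  assumes fin: "finite I" and m0: "\<And>i. i \<in> I \<Longrightarrow> 0 \<le> m i" and m1: "(\<Sum>i\<in>I. m i) = 1"
  shows "tv1 q (\<lambda>a. \<Sum>i\<in>I. m i * p i a) \<le> (\<Sum>i\<in>I. m i * tv1 q (p i :: 'a::finite \<Rightarrow> real))"
proof -
  have "(\<Sum>a\<in>UNIV. \<bar>q a - (\<Sum>i\<in>I. m i * p i a)\<bar>) \<le> (\<Sum>a\<in>UNIV. \<Sum>i\<in>I. m i * \<bar>q a - p i a\<bar>)"
  proof (rule sum_mono)
    fix a
    have "q a - (\<Sum>i\<in>I. m i * p i a) = (\<Sum>i\<in>I. m i * (q a - p i a))"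
      using m1 by (simp add: right_diff_distrib sum_subtractf sum_distrib_right[symmetric])
    also have "\<bar>\<dots>\<bar> \<le> (\<Sum>i\<in>I. \<bar>m i * (q a - p i a)\<bar>)" by (rule sum_abs)
    also have "\<dots> = (\<Sum>i\<in>I. m i * \<bar>q a - p i a\<bar>)" using m0 by (intro sum.cong refl) (simp add: abs_mult)
    finally show "\<bar>q a - (\<Sum>i\<in>I. m i * p i a)\<bar> \<le> (\<Sum>i\<in>I. m i * \<bar>q a - p i a\<bar>)" .
  qed
  also have "\<dots> = (\<Sum>i\<in>I. m i * (\<Sum>a\<in>UNIV. \<bar>q a - p i a\<bar>))"
    by (simp add: sum_distrib_left) (rule sum.swap)
  finally show ?thesis unfolding tv1_def
    by (simp add: sum_divide_distrib[symmetric] divide_right_mono)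
qed

definition dd :: "nat \<Rightarrow> ((nat \<Rightarrow> 'a::finite) \<Rightarrow> real) \<Rightarrow> (nat \<Rightarrow> 'a) set \<Rightarrow> (nat \<Rightarrow> 'a) set \<Rightarrow> real" where
  "dd n \<mu> S1 S2 = (1 / real n) * (\<Sum>x<n. tv1 (marg1 \<mu> S1 x) (marg1 \<mu> S2 x))"

lemma tv1_le1: assumes "NN \<mu> S1" "NN \<mu> S2" shows "tv1 (marg1 \<mu> S1 x) (marg1 \<mu> (S2 :: (nat \<Rightarrow> 'a::finite) set) x) \<le> 1"
proof -
  have s: "(\<Sum>a\<in>UNIV. marg1 \<mu> S x a) \<le> 1" if "NN \<mu> S" for S :: "(nat \<Rightarrow> 'a) set"
  proof (cases "msr \<mu> S = 0")
    case True then show ?thesis by (simp add: marg1_def)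
  next
    case False then show ?thesis using sum_marg1[OF that] msr_nonneg[OF that] by simp
  qed
  have "(\<Sum>a\<in>UNIV. \<bar>marg1 \<mu> S1 x a - marg1 \<mu> S2 x a\<bar>) \<le> (\<Sum>a\<in>UNIV. marg1 \<mu> S1 x a + marg1 \<mu> S2 x a)"
    using marg1_nonneg[OF assms(1)] marg1_nonneg[OF assms(2)] by (intro sum_mono) (simp add: abs_le_iff)
  then show ?thesis using s[OF assms(1)] s[OF assms(2)] by (simp add: tv1_def sum.distrib)
qed

lemma dd_le1: assumes "NN \<mu> S1" "NN \<mu> S2" "n > 0" shows "dd n \<mu> S1 (S2 :: (nat \<Rightarrow> 'a::finite) set) \<le> 1"
proof -
  have "(\<Sum>x<n. tv1 (marg1 \<mu> S1 x) (marg1 \<mu> S2 x)) \<le> (\<Sum>x<n. 1)" by (intro sum_mono tv1_le1 assms)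
  then show ?thesis using assms(3) by (simp add: dd_def field_simps)
qed

lemma dd_nonneg: "0 \<le> dd n \<mu> S1 S2"
  unfolding dd_def by (intro mult_nonneg_nonneg sum_nonneg tv1_nonneg) auto

lemma prod_tv_avg:
  assumes N1: "NN \<mu> S1" "msr \<mu> S1 > 0" and N2: "NN \<mu> S2" "msr \<mu> S2 > 0" and n: "n > 0"
  shows "(1 / real n ^ k) * (\<Sum>xs\<in>tuples n k. tv_list k (prod_marg \<mu> S1 xs) (prod_marg \<mu> (S2 :: (nat \<Rightarrow> 'a::finite) set) xs))
     \<le> real k * dd n \<mu> S1 S2"
proof (induction k)
  case 0
  then show ?case by (simp add: tuples_0 tv_list_def)
next
  case (Suc k)
  have "(\<Sum>xs\<in>tuples n (Suc k). tv_list (Suc k) (prod_marg \<mu> S1 xs) (prod_marg \<mu> S2 xs))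
     = (\<Sum>y<n. \<Sum>xs\<in>tuples n k. tv_list (Suc k) (prod_marg \<mu> S1 (y#xs)) (prod_marg \<mu> S2 (y#xs)))"
    by (simp add: sum_tuples_Suc)
  also have "\<dots> \<le> (\<Sum>y<n. \<Sum>xs\<in>tuples n k. tv1 (marg1 \<mu> S1 y) (marg1 \<mu> S2 y) + tv_list k (prod_marg \<mu> S1 xs) (prod_marg \<mu> S2 xs))"
  proof (intro sum_mono)
    fix y xs assume "xs \<in> tuples n k"
    then have l: "length xs = k" by (simp add: tuples_def)
    show "tv_list (Suc k) (prod_marg \<mu> S1 (y#xs)) (prod_marg \<mu> S2 (y#xs)) \<le> tv1 (marg1 \<mu> S1 y) (marg1 \<mu> S2 y) + tv_list k (prod_marg \<mu> S1 xs) (prod_marg \<mu> S2 xs)"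
      by (rule tv_prod_step) (auto simp: marg1_nonneg[OF N1(1)] sum_marg1[OF N1] prod_marg_nonneg[OF N2(1)]
        sum_prod_marg[OF N2, of xs, unfolded l] prod_marg_Cons)
  qed
  also have "\<dots> = real n ^ k * (\<Sum>y<n. tv1 (marg1 \<mu> S1 y) (marg1 \<mu> S2 y)) + real n * (\<Sum>xs\<in>tuples n k. tv_list k (prod_marg \<mu> S1 xs) (prod_marg \<mu> S2 xs))"
    by (simp add: sum.distrib card_tuples sum_distrib_left)
  finally have "(1 / real n ^ Suc k) * (\<Sum>xs\<in>tuples n (Suc k). tv_list (Suc k) (prod_marg \<mu> S1 xs) (prod_marg \<mu> S2 xs))
     \<le> (1 / real n ^ Suc k) * (real n ^ k * (\<Sum>y<n. tv1 (marg1 \<mu> S1 y) (marg1 \<mu> S2 y)) + real n * (\<Sum>xs\<in>tuples n k. tv_list k (prod_marg \<mu> S1 xs) (prod_marg \<mu> S2 xs)))"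
    using n by (intro mult_left_mono) auto
  also have "\<dots> = dd n \<mu> S1 S2 + (1 / real n ^ k) * (\<Sum>xs\<in>tuples n k. tv_list k (prod_marg \<mu> S1 xs) (prod_marg \<mu> S2 xs))"
    using n by (simp add: dd_def field_simps)
  finally show ?case using Suc by (simp add: algebra_simps)
qed

lemma dd_mix:
  assumes P: "is_prob n \<mu>" and len: "length ys = t"
  shows "dd n \<mu> S (cube n) \<le> (\<Sum>\<tau>'\<in>LL t. msr \<mu> (Cl n ys \<tau>') * dd n \<mu> S (Cl n ys \<tau>' :: (nat \<Rightarrow> 'a::finite) set))"
proof -
  have m0: "\<And>\<tau>. \<tau> \<in> LL t \<Longrightarrow> 0 \<le> msr \<mu> (Cl n ys \<tau> :: (nat \<Rightarrow> 'a) set)" by (rule msr_nonneg[OF NN_Cl[OF P]])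
  have m1: "(\<Sum>\<tau>\<in>LL t. msr \<mu> (Cl n ys \<tau> :: (nat \<Rightarrow> 'a) set)) = 1" by (rule sum_msr_Cl[OF P len])
  have "tv1 (marg1 \<mu> S x) (marg1 \<mu> (cube n) x) \<le> (\<Sum>\<tau>'\<in>LL t. msr \<mu> (Cl n ys \<tau>') * tv1 (marg1 \<mu> S x) (marg1 \<mu> (Cl n ys \<tau>' :: (nat \<Rightarrow> 'a) set) x))" for x
  proof -
    have "marg1 \<mu> (cube n) x = (\<lambda>a. \<Sum>\<tau>'\<in>LL t. msr \<mu> (Cl n ys \<tau>') * marg1 \<mu> (Cl n ys \<tau>' :: (nat \<Rightarrow> 'a) set) x a)"
      by (rule ext, rule marg1_cube_mix[OF P len])
    then show ?thesis using tv1_convex[OF finite_LL m0 m1] by simp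
  qed
  then have "(\<Sum>x<n. tv1 (marg1 \<mu> S x) (marg1 \<mu> (cube n) x)) \<le> (\<Sum>x<n. \<Sum>\<tau>'\<in>LL t. msr \<mu> (Cl n ys \<tau>') * tv1 (marg1 \<mu> S x) (marg1 \<mu> (Cl n ys \<tau>' :: (nat \<Rightarrow> 'a) set) x))"
    by (intro sum_mono)
  also have "\<dots> = (\<Sum>\<tau>'\<in>LL t. msr \<mu> (Cl n ys \<tau>') * (\<Sum>x<n. tv1 (marg1 \<mu> S x) (marg1 \<mu> (Cl n ys \<tau>' :: (nat \<Rightarrow> 'a) set) x)))"
    by (simp add: sum_distrib_left) (rule sum.swap)
  finally show ?thesis unfolding dd_def
    by (simp add: sum_distrib_left[symmetric] sum_divide_distrib[symmetric] divide_right_mono)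
qed

lemma mixture:
  assumes P: "is_prob n \<mu>" and n: "n > 0" and len: "length ys = t"
  shows "defect n \<mu> k (cube n) \<le> (\<Sum>\<tau>\<in>LL t. msr \<mu> (Cl n ys \<tau>) * defect n \<mu> k (Cl n ys \<tau>))
     + real k * (\<Sum>\<tau>\<in>LL t. \<Sum>\<tau>'\<in>LL t. msr \<mu> (Cl n ys \<tau>) * msr \<mu> (Cl n ys \<tau>') * dd n \<mu> (Cl n ys \<tau>) (Cl n ys \<tau>' :: (nat \<Rightarrow> 'a::finite) set))"
proof -
  define m where "m \<tau> = msr \<mu> (Cl n ys \<tau> :: (nat \<Rightarrow> 'a) set)" for \<tau>
  define C where "C \<tau> = (Cl n ys \<tau> :: (nat \<Rightarrow> 'a) set)" for \<tau>
  have m0: "\<And>\<tau>. \<tau> \<in> LL t \<Longrightarrow> 0 \<le> m \<tau>" unfolding m_def by (rule msr_nonneg[OF NN_Cl[OF P]])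
  have m1: "(\<Sum>\<tau>\<in>LL t. m \<tau>) = 1" unfolding m_def by (rule sum_msr_Cl[OF P len])
  define Pr where "Pr S = (1 / real n ^ k) * (\<Sum>xs\<in>tuples n k. tv_list k (prod_marg \<mu> S xs) (prod_marg \<mu> (cube n) xs))" for S
  have step: "tv_list k (marg \<mu> (cube n) xs) (prod_marg \<mu> (cube n) xs)
     \<le> (\<Sum>\<tau>\<in>LL t. m \<tau> * (tv_list k (marg \<mu> (C \<tau>) xs) (prod_marg \<mu> (C \<tau>) xs) + tv_list k (prod_marg \<mu> (C \<tau>) xs) (prod_marg \<mu> (cube n) xs)))" for xs
  proof -
    have "marg \<mu> (cube n) xs = (\<lambda>\<rho>. \<Sum>\<tau>\<in>LL t. m \<tau> * marg \<mu> (C \<tau>) xs \<rho>)"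
      unfolding m_def C_def by (rule ext, rule marg_cube_mix[OF P len])
    then have "tv_list k (marg \<mu> (cube n) xs) (prod_marg \<mu> (cube n) xs) \<le> (\<Sum>\<tau>\<in>LL t. m \<tau> * tv_list k (marg \<mu> (C \<tau>) xs) (prod_marg \<mu> (cube n) xs))"
      using tv_list_convex[OF finite_LL m0 m1] by simp
    also have "\<dots> \<le> (\<Sum>\<tau>\<in>LL t. m \<tau> * (tv_list k (marg \<mu> (C \<tau>) xs) (prod_marg \<mu> (C \<tau>) xs) + tv_list k (prod_marg \<mu> (C \<tau>) xs) (prod_marg \<mu> (cube n) xs)))"
      by (intro sum_mono mult_left_mono tv_list_triangle m0)
    finally show ?thesis .
  qed
  have "defect n \<mu> k (cube n) \<le> (1 / real n ^ k) * (\<Sum>xs\<in>tuples n k. \<Sum>\<tau>\<in>LL t. m \<tau> * (tv_list k (marg \<mu> (C \<tau>) xs) (prod_marg \<mu> (C \<tau>) xs) + tv_list k (prod_marg \<mu> (C \<tau>) xs) (prod_marg \<mu> (cube n) xs)))"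
    unfolding defect_def using n by (intro mult_left_mono sum_mono step) auto
  also have "\<dots> = (\<Sum>\<tau>\<in>LL t. m \<tau> * defect n \<mu> k (C \<tau>)) + (\<Sum>\<tau>\<in>LL t. m \<tau> * Pr (C \<tau>))"
  proof -
    have "(\<Sum>xs\<in>tuples n k. \<Sum>\<tau>\<in>LL t. m \<tau> * (tv_list k (marg \<mu> (C \<tau>) xs) (prod_marg \<mu> (C \<tau>) xs) + tv_list k (prod_marg \<mu> (C \<tau>) xs) (prod_marg \<mu> (cube n) xs)))
      = (\<Sum>\<tau>\<in>LL t. \<Sum>xs\<in>tuples n k. m \<tau> * (tv_list k (marg \<mu> (C \<tau>) xs) (prod_marg \<mu> (C \<tau>) xs) + tv_list k (prod_marg \<mu> (C \<tau>) xs) (prod_marg \<mu> (cube n) xs)))"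
      by (rule sum.swap)
    then show ?thesis unfolding defect_def Pr_def
      by (simp add: sum_distrib_left distrib_left sum.distrib)
  qed
  also have "\<dots> \<le> (\<Sum>\<tau>\<in>LL t. m \<tau> * defect n \<mu> k (C \<tau>)) + (\<Sum>\<tau>\<in>LL t. m \<tau> * (real k * (\<Sum>\<tau>'\<in>LL t. m \<tau>' * dd n \<mu> (C \<tau>) (C \<tau>'))))"
  proof -
    have "m \<tau> * Pr (C \<tau>) \<le> m \<tau> * (real k * (\<Sum>\<tau>'\<in>LL t. m \<tau>' * dd n \<mu> (C \<tau>) (C \<tau>')))" if "\<tau> \<in> LL t" for \<tau>
    proof (cases "m \<tau> = 0")
      case True then show ?thesis by simp
    next
      case False
      then have mp: "m \<tau> > 0" using m0[OF that] by simp
      have "Pr (C \<tau>) \<le> real k * dd n \<mu> (C \<tau>) (cube n)"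
        unfolding Pr_def C_def
        by (rule prod_tv_avg[OF NN_Cl[OF P] _ NN_cube[OF P] _ n]) (use mp msr_cube[OF P] in \<open>auto simp: m_def\<close>)
      also have "\<dots> \<le> real k * (\<Sum>\<tau>'\<in>LL t. m \<tau>' * dd n \<mu> (C \<tau>) (C \<tau>'))"
        unfolding m_def C_def by (intro mult_left_mono dd_mix[OF P len]) auto
      finally show ?thesis using mp by simp
    qed
    then show ?thesis by (intro add_left_mono sum_mono) auto
  qed
  also have "\<dots> = (\<Sum>\<tau>\<in>LL t. m \<tau> * defect n \<mu> k (C \<tau>)) + real k * (\<Sum>\<tau>\<in>LL t. \<Sum>\<tau>'\<in>LL t. m \<tau> * m \<tau>' * dd n \<mu> (C \<tau>) (C \<tau>'))"
    by (simp add: sum_distrib_left mult.assoc mult.left_commute)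
  finally show ?thesis unfolding m_def C_def .
qed

lemma per_ys:
  assumes P: "is_prob n (\<mu> :: (nat \<Rightarrow> 'a::finite) \<Rightarrow> real)" and n: "n > 0" and len: "length ys = t"
    and d: "\<delta> > 0" and e: "\<eta> > 0"
    and Hyp: "\<forall>S1 S2. is_state n \<mu> \<delta> k S1 \<and> is_state n \<mu> \<delta> k S2 \<and>
               msr \<mu> S1 \<ge> \<eta> \<and> msr \<mu> S2 \<ge> \<eta> \<longrightarrow>
         (1 / real n) * (\<Sum>x<n. tv1 (marg1 \<mu> S1 x) (marg1 \<mu> S2 x)) < \<delta>"
  shows "defect n \<mu> k (cube n) \<le> (1 + 2 * real k / \<delta>) * (\<Sum>\<tau>\<in>LL t. msr \<mu> (Cl n ys \<tau>) * defect n \<mu> k (Cl n ys \<tau>))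
     + real k * \<delta> + 2 * real k * real (card (UNIV::'a set)) ^ t * \<eta>"
proof -
  define m where "m \<tau> = msr \<mu> (Cl n ys \<tau> :: (nat \<Rightarrow> 'a) set)" for \<tau>
  define C where "C \<tau> = (Cl n ys \<tau> :: (nat \<Rightarrow> 'a) set)" for \<tau>
  define X where "X = (\<Sum>\<tau>\<in>LL t. m \<tau> * defect n \<mu> k (C \<tau>))"
  have m0: "\<And>\<tau>. 0 \<le> m \<tau>" unfolding m_def by (rule msr_nonneg[OF NN_Cl[OF P]])
  have m1: "(\<Sum>\<tau>\<in>LL t. m \<tau>) = 1" unfolding m_def by (rule sum_msr_Cl[OF P len])
  define good where "good \<tau> \<longleftrightarrow> m \<tau> \<ge> \<eta> \<and> defect n \<mu> k (C \<tau>) < \<delta>" for \<tau>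
  define ind where "ind \<tau> = (if good \<tau> then 0 else 1::real)" for \<tau>
  have ind0: "0 \<le> ind \<tau>" for \<tau> by (simp add: ind_def)
  have dd_b: "dd n \<mu> (C \<tau>) (C \<tau>') \<le> \<delta> + ind \<tau> + ind \<tau>'" for \<tau> \<tau>'
  proof (cases "good \<tau> \<and> good \<tau>'")
    case True
    then have "is_state n \<mu> \<delta> k (C \<tau>) \<and> is_state n \<mu> \<delta> k (C \<tau>') \<and> msr \<mu> (C \<tau>) \<ge> \<eta> \<and> msr \<mu> (C \<tau>') \<ge> \<eta>"
      using e unfolding is_state_defect good_def m_def C_def by (auto simp: Cl_sub)
    then have "dd n \<mu> (C \<tau>) (C \<tau>') < \<delta>" using Hyp unfolding dd_def by blast
    then show ?thesis using ind0[of \<tau>] ind0[of \<tau>'] by linarith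
  next
    case False
    have "dd n \<mu> (C \<tau>) (C \<tau>') \<le> 1" unfolding C_def by (intro dd_le1 NN_Cl P n)
    then show ?thesis using False d ind0[of \<tau>] ind0[of \<tau>'] by (auto simp: ind_def)
  qed
  have "(\<Sum>\<tau>\<in>LL t. \<Sum>\<tau>'\<in>LL t. m \<tau> * m \<tau>' * dd n \<mu> (C \<tau>) (C \<tau>'))
      \<le> (\<Sum>\<tau>\<in>LL t. \<Sum>\<tau>'\<in>LL t. \<delta> * (m \<tau>' * m \<tau>) + m \<tau>' * (m \<tau> * ind \<tau>) + m \<tau> * (m \<tau>' * ind \<tau>'))"
  proof (intro sum_mono)
    fix \<tau> \<tau>'
    have "m \<tau> * m \<tau>' * dd n \<mu> (C \<tau>) (C \<tau>') \<le> m \<tau> * m \<tau>' * (\<delta> + ind \<tau> + ind \<tau>')"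
      using m0[of \<tau>] m0[of \<tau>'] by (intro mult_left_mono dd_b) auto
    then show "m \<tau> * m \<tau>' * dd n \<mu> (C \<tau>) (C \<tau>') \<le> \<delta> * (m \<tau>' * m \<tau>) + m \<tau>' * (m \<tau> * ind \<tau>) + m \<tau> * (m \<tau>' * ind \<tau>')"
      by (simp add: algebra_simps)
  qed
  also have "\<dots> = \<delta> * ((\<Sum>\<tau>\<in>LL t. m \<tau>) * (\<Sum>\<tau>\<in>LL t. m \<tau>)) + (\<Sum>\<tau>\<in>LL t. m \<tau>) * (\<Sum>\<tau>\<in>LL t. m \<tau> * ind \<tau>) + (\<Sum>\<tau>\<in>LL t. m \<tau>) * (\<Sum>\<tau>\<in>LL t. m \<tau> * ind \<tau>)"
    by (simp add: sum.distrib sum_distrib_left sum_distrib_right sum.swap[of "\<lambda>a b. m b * (m a * ind a)"])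
  also have "\<dots> = \<delta> + 2 * (\<Sum>\<tau>\<in>LL t. m \<tau> * ind \<tau>)" using m1 by simp
  finally have A: "(\<Sum>\<tau>\<in>LL t. \<Sum>\<tau>'\<in>LL t. m \<tau> * m \<tau>' * dd n \<mu> (C \<tau>) (C \<tau>')) \<le> \<delta> + 2 * (\<Sum>\<tau>\<in>LL t. m \<tau> * ind \<tau>)" .
  have "m \<tau> * ind \<tau> \<le> \<eta> + m \<tau> * defect n \<mu> k (C \<tau>) / \<delta>" for \<tau>
  proof -
    have dn: "0 \<le> defect n \<mu> k (C \<tau>)" unfolding defect_def by (intro mult_nonneg_nonneg sum_nonneg tv_list_nonneg) auto
    then have q: "0 \<le> m \<tau> * defect n \<mu> k (C \<tau>) / \<delta>" using m0[of \<tau>] d by simp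
    show ?thesis
    proof (cases "good \<tau>")
      case True then show ?thesis using q e by (simp add: ind_def)
    next
      case False
      show ?thesis
      proof (cases "m \<tau> < \<eta>")
        case True then show ?thesis using q e by (simp add: ind_def)
      next
        case F2: False
        then have "defect n \<mu> k (C \<tau>) \<ge> \<delta>" using False by (auto simp: good_def)
        then have "m \<tau> * \<delta> \<le> m \<tau> * defect n \<mu> k (C \<tau>)" using m0[of \<tau>] by (intro mult_left_mono) auto
        then have "m \<tau> \<le> m \<tau> * defect n \<mu> k (C \<tau>) / \<delta>" using d by (simp add: pos_le_divide_eq)
        then show ?thesis using e False by (simp add: ind_def)
      qed
    qed
  qed
  then have "(\<Sum>\<tau>\<in>LL t. m \<tau> * ind \<tau>) \<le> (\<Sum>\<tau>\<in>LL t. \<eta> + m \<tau> * defect n \<mu> k (C \<tau>) / \<delta>)" by (intro sum_mono)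
  also have "\<dots> = real (card (UNIV::'a set)) ^ t * \<eta> + X / \<delta>"
    by (simp add: sum.distrib card_LL X_def sum_divide_distrib)
  finally have B: "(\<Sum>\<tau>\<in>LL t. m \<tau> * ind \<tau>) \<le> real (card (UNIV::'a set)) ^ t * \<eta> + X / \<delta>" .
  have "defect n \<mu> k (cube n) \<le> X + real k * (\<Sum>\<tau>\<in>LL t. \<Sum>\<tau>'\<in>LL t. m \<tau> * m \<tau>' * dd n \<mu> (C \<tau>) (C \<tau>'))"
    using mixture[OF P n len, of k] unfolding X_def m_def C_def .
  also have "\<dots> \<le> X + real k * (\<delta> + 2 * (real (card (UNIV::'a set)) ^ t * \<eta> + X / \<delta>))"
    using A B by (intro add_left_mono mult_left_mono) auto
  also have "\<dots> = (1 + 2 * real k / \<delta>) * X + real k * \<delta> + 2 * real k * real (card (UNIV::'a set)) ^ t * \<eta>"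
    by (simp add: algebra_simps)
  finally show ?thesis unfolding X_def m_def C_def .
qed

lemma avg_bound:
  assumes P: "is_prob n (\<mu> :: (nat \<Rightarrow> 'a::finite) \<Rightarrow> real)" and n: "n > 0" and d: "\<delta> > 0" and e: "\<eta> > 0"
    and Hyp: "\<forall>S1 S2. is_state n \<mu> \<delta> k S1 \<and> is_state n \<mu> \<delta> k S2 \<and>
               msr \<mu> S1 \<ge> \<eta> \<and> msr \<mu> S2 \<ge> \<eta> \<longrightarrow>
         (1 / real n) * (\<Sum>x<n. tv1 (marg1 \<mu> S1 x) (marg1 \<mu> S2 x)) < \<delta>"
  shows "defect n \<mu> k (cube n) \<le> (1 + 2 * real k / \<delta>) * Xi n \<mu> k t + real k * \<delta> + 2 * real k * real (card (UNIV::'a set)) ^ t * \<eta>"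
proof -
  define A where "A = (1 + 2 * real k / \<delta>)"
  define B where "B = real k * \<delta> + 2 * real k * real (card (UNIV::'a set)) ^ t * \<eta>"
  have "(\<Sum>ys\<in>tuples n t. defect n \<mu> k (cube n)) \<le> (\<Sum>ys\<in>tuples n t. A * (\<Sum>\<tau>\<in>LL t. msr \<mu> (Cl n ys \<tau>) * defect n \<mu> k (Cl n ys \<tau>)) + B)"
  proof (intro sum_mono)
    fix ys assume "ys \<in> tuples n t"
    then have "length ys = t" by (simp add: tuples_def)
    from per_ys[OF P n this d e Hyp] show "defect n \<mu> k (cube n) \<le> A * (\<Sum>\<tau>\<in>LL t. msr \<mu> (Cl n ys \<tau>) * defect n \<mu> k (Cl n ys \<tau>)) + B"
      by (simp add: A_def B_def add.assoc)
  qed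
  also have "\<dots> = A * (real n ^ t * Xi n \<mu> k t) + real n ^ t * B"
    using n by (simp add: Xi_def sum.distrib sum_distrib_left[symmetric] card_tuples)
  finally have "real n ^ t * defect n \<mu> k (cube n) \<le> real n ^ t * (A * Xi n \<mu> k t + B)"
    by (simp add: card_tuples algebra_simps)
  then have "defect n \<mu> k (cube n) \<le> A * Xi n \<mu> k t + B" using n by simp
  then show ?thesis by (simp add: A_def B_def add.assoc)
qed

theorem corollary2p3:
  fixes \<epsilon> :: real and k :: nat
  assumes "\<epsilon> > 0" and "k \<ge> 2"
  shows "\<exists>\<delta>>0. \<exists>\<eta>>0. \<forall>n::nat. real n > 1 / \<eta> \<longrightarrow>
    (\<forall>\<mu> :: (nat \<Rightarrow> 'a::finite) \<Rightarrow> real. is_prob n \<mu> \<longrightarrow>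
      (\<forall>S1 S2. is_state n \<mu> \<delta> k S1 \<and> is_state n \<mu> \<delta> k S2 \<and>
               msr \<mu> S1 \<ge> \<eta> \<and> msr \<mu> S2 \<ge> \<eta> \<longrightarrow>
         (1 / real n) * (\<Sum>x<n. tv1 (marg1 \<mu> S1 x) (marg1 \<mu> S2 x)) < \<delta>) \<longrightarrow>
      is_symmetric n \<mu> \<epsilon> k)"
proof -
  have eps: "\<epsilon> > 0" using assms(1) .
  have kp: "real k > 0" using assms(2) by simp
  define c where "c = real (card (UNIV::'a set))"
  have c1: "c \<ge> 1" unfolding c_def using card_gt_0_iff[of "UNIV::'a set"] by simp
  define K where "K = KK (card (UNIV::'a set)) k"
  have K1: "K \<ge> 1"
  proof -
    have "K = (\<Sum>j<k. c ^ j)" by (simp add: K_def KK_def c_def)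
    also have "\<dots> \<ge> (\<Sum>j\<in>{0}. c ^ j)" using assms(2) c1 by (intro sum_mono2) auto
    finally show ?thesis by simp
  qed
  define \<delta> where "\<delta> = \<epsilon> / (4 * real k)"
  have dp: "\<delta> > 0" using eps kp by (simp add: \<delta>_def)
  define A where "A = 1 + 2 * real k / \<delta>"
  have Ap: "A > 0" using dp kp by (simp add: A_def add_pos_nonneg)
  define \<beta> where "\<beta> = \<epsilon> / (4 * A)"
  have bp: "\<beta> > 0" using eps Ap by (simp add: \<beta>_def)
  define \<gamma> where "\<gamma> = 2 * \<beta> / K"
  have gp: "\<gamma> > 0" using bp K1 by (simp add: \<gamma>_def)
  define T where "T = nat \<lceil>real k / (2 * \<gamma> * \<beta>)\<rceil> + 1"
  have Tp: "T > 0" by (simp add: T_def)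
  have Tge: "real T \<ge> real k / (2 * \<gamma> * \<beta>)" unfolding T_def
    using real_nat_ceiling_ge[of "real k / (2 * \<gamma> * \<beta>)"] by simp
  define \<eta> where "\<eta> = \<epsilon> / (8 * real k * c ^ T)"
  have ep: "\<eta> > 0" using eps kp c1 by (simp add: \<eta>_def)
  have boundXi: "\<gamma> * K / 4 + real k / (4 * \<gamma> * real T) \<le> \<beta>"
  proof -
    have "\<gamma> * K / 4 = \<beta> / 2" using K1 by (simp add: \<gamma>_def)
    moreover have "real k / (4 * \<gamma> * real T) \<le> \<beta> / 2"
    proof -
      have "real k \<le> real T * (2 * \<gamma> * \<beta>)" using Tge gp bp by (simp add: pos_divide_le_eq)
      then have "real k \<le> \<beta> / 2 * (4 * \<gamma> * real T)" by (simp add: algebra_simps)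
      then show ?thesis using gp Tp by (simp add: pos_divide_le_eq)
    qed
    ultimately show ?thesis by linarith
  qed
  show ?thesis
  proof (rule exI[of _ \<delta>], intro conjI dp, rule exI[of _ \<eta>], intro conjI ep allI impI)
    fix n :: nat and \<mu> :: "(nat \<Rightarrow> 'a) \<Rightarrow> real"
    assume nlarge: "real n > 1 / \<eta>" and P: "is_prob n \<mu>"
      and Hyp: "\<forall>S1 S2. is_state n \<mu> \<delta> k S1 \<and> is_state n \<mu> \<delta> k S2 \<and>
               msr \<mu> S1 \<ge> \<eta> \<and> msr \<mu> S2 \<ge> \<eta> \<longrightarrow>
         (1 / real n) * (\<Sum>x<n. tv1 (marg1 \<mu> S1 x) (marg1 \<mu> S2 x)) < \<delta>"
    have n: "n > 0" using nlarge ep by (metis gr0I less_numeral_extra(3) of_nat_0 order.asym zero_less_divide_1_iff)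
    obtain t where t: "t < T" and Xt: "Xi n \<mu> k t \<le> \<gamma> * K / 4 + real k / (4 * \<gamma> * real T)"
      using exists_good_t[OF P n gp Tp, of k] unfolding K_def by blast
    have Xb: "Xi n \<mu> k t \<le> \<beta>" using Xt boundXi by linarith
    have ct: "c ^ t \<le> c ^ T" using c1 t by (intro power_increasing) auto
    have "defect n \<mu> k (cube n) \<le> A * Xi n \<mu> k t + real k * \<delta> + 2 * real k * c ^ t * \<eta>"
      using avg_bound[OF P n dp ep Hyp, of t] by (simp add: A_def c_def)
    also have "\<dots> \<le> A * \<beta> + real k * \<delta> + 2 * real k * c ^ T * \<eta>"
      using Xb Ap ct ep kp by (intro add_mono mult_left_mono mult_right_mono) auto
    finally have D: "defect n \<mu> k (cube n) \<le> A * \<beta> + real k * \<delta> + 2 * real k * c ^ T * \<eta>" .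
    have e1: "A * \<beta> = \<epsilon> / 4" using Ap by (simp add: \<beta>_def)
    have e2: "real k * \<delta> = \<epsilon> / 4" using kp by (simp add: \<delta>_def)
    have e3: "2 * real k * c ^ T * \<eta> = \<epsilon> / 4" using kp c1 by (simp add: \<eta>_def)
    have "defect n \<mu> k (cube n) < \<epsilon>" using D e1 e2 e3 eps by linarith
    moreover have "msr \<mu> (cube n) > 0" using msr_cube[OF P] by simp
    ultimately have "is_symmetric n \<mu> \<epsilon> k"
      unfolding is_symmetric_def is_state_defect by simp
    then show "is_symmetric n \<mu> \<epsilon> k" .
  qed
qed

end
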